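(* Let $\alpha>1$, $k_1>1+\frac{1}{\alpha-1}$, $\delta\in(0,1)$, $f(t,\delta)=\log\big(\frac{4k_1Kdt^\alpha}{\delta}\big)$ and $g(t,\delta)=4\log\big(\frac{4k_1K5^dt^\alpha}{\delta}\big)$. Then for all $T$, $$\mathbb{P}_\nu\big((\mathcal{E}^T)^c\big)\le\frac{\delta}{4k_1}\Big(\frac T2\Big)^{1-\alpha}(\log T+1)f(T,\delta)+\frac{\delta}{4k_1}\Big(\frac T2\Big)^{1-\alpha}(\log T+1)f(T,\delta d/5^d),$$ where $\mathcal{E}^T=\bigcap_{\lceil T/2\rceil\le t\le T}\mathcal{E}_t$. Moreover, $\mathbb{P}_\nu(\mathcal{E}^c)\le\delta$, where $\mathcal{E}=\bigcap_{t\ge1}\mathcal{E}_t$.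
   Context: Bandit $\nu=(\nu_1,\dots,\nu_K)$ of distributions on $\mathbb{R}^d$ with means $\mu_1,\dots,\mu_K$, each marginally $\sigma$-subGaussian (each coordinate $X^c$ satisfies $\mathbb{E}[e^{\lambda(X^c-\mathbb{E}X^c)}]\le e^{\lambda^2\sigma^2/2}$ for all $\lambda$) and norm-$\sigma_u$-subGaussian ($X^\top z$ is $\sigma_u$-subGaussian for every unit vector $z$). Samples are collected sequentially by an algorithm choosing arms based on the past, each observation being an independent draw from the chosen arm. $N_{t,i}$ is the number of pulls of arm $i$ up to round $t$ and $\hat\mu_{t,i}$ the empirical mean. $\beta_i(t,\delta)=\sqrt{2\sigma^2f(t,\delta)/N_{t,i}}$, $U_i(t,\delta)=\sqrt{2\sigma_u^2g(t,\delta)/N_{t,i}}$, and $\mathcal{E}_t$ is the event that for all $i\in[K]$, $\|\hat\mu_{t,i}-\mu_i\|_\infty\le\beta_i(t,\delta)$ and $\|\hat\mu_{t,i}-\mu_i\|_2\le U_i(t,\delta)$. *)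

theory Defs
  imports "HOL-Probability.Probability"
begin

definition subgaussian :: "'a measure \<Rightarrow> ('a \<Rightarrow> real) \<Rightarrow> real \<Rightarrow> bool" where
  "subgaussian M X \<sigma> \<longleftrightarrow>
     integrable M X \<and>
     (\<forall>l::real. integrable M (\<lambda>x. exp (l * (X x - (\<integral>y. X y \<partial>M)))) \<and>
        (\<integral>x. exp (l * (X x - (\<integral>y. X y \<partial>M))) \<partial>M) \<le> exp (l\<^sup>2 * \<sigma>\<^sup>2 / 2))"

definition mean_vec :: "(real ^ 'd) measure \<Rightarrow> real ^ 'd" where
  "mean_vec P = (\<chi> c. \<integral>x. x $ c \<partial>P)"

definition pulls :: "(nat \<Rightarrow> 'w \<Rightarrow> nat) \<Rightarrow> nat \<Rightarrow> nat \<Rightarrow> 'w \<Rightarrow> nat" where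
  "pulls A t i w = card {s \<in> {1..t}. A s w = i}"

definition emp_mean :: "(nat \<Rightarrow> 'w \<Rightarrow> nat) \<Rightarrow> (nat \<Rightarrow> 'w \<Rightarrow> real ^ 'd) \<Rightarrow> nat \<Rightarrow> nat \<Rightarrow> 'w \<Rightarrow> real ^ 'd" where
  "emp_mean A Y t i w = (1 / real (pulls A t i w)) *\<^sub>R (\<Sum>s\<in>{s \<in> {1..t}. A s w = i}. Y s w)"

text \<open>The good event E_t. beta and U are given as functions of (N, t).
  For an arm with N_{t,i} = 0 the confidence radii are infinite, so no constraint.\<close>
definition good_event ::
  "nat \<Rightarrow> (nat \<Rightarrow> real ^ 'd) \<Rightarrow> real \<Rightarrow> real \<Rightarrow> (nat \<Rightarrow> real) \<Rightarrow> (nat \<Rightarrow> real) \<Rightarrow>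
   (nat \<Rightarrow> 'w \<Rightarrow> nat) \<Rightarrow> (nat \<Rightarrow> 'w \<Rightarrow> real ^ 'd) \<Rightarrow> nat \<Rightarrow> 'w \<Rightarrow> bool" where
  "good_event K \<mu> \<sigma> \<sigma>u f g A Y t w \<longleftrightarrow>
     (\<forall>i<K. pulls A t i w > 0 \<longrightarrow>
        (\<forall>c. \<bar>emp_mean A Y t i w $ c - \<mu> i $ c\<bar>
               \<le> sqrt (2 * \<sigma>\<^sup>2 * f t / real (pulls A t i w))) \<and>
        norm (emp_mean A Y t i w - \<mu> i) \<le> sqrt (2 * \<sigma>u\<^sup>2 * g t / real (pulls A t i w)))"

end

theory Submission
  imports Defs "HOL-Analysis.Ball_Volume" "HOL-Analysis.Harmonic_Numbers"
begin

lemma KL: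
  fixes M G :: "'w measure" and a :: "'w \<Rightarrow> nat" and Y :: "'w \<Rightarrow> 'b::euclidean_space"
    and \<nu> :: "'b measure"
  assumes M: "finite_measure M"
  and sub: "subalgebra M G"
  and Ameas: "a \<in> measurable G (count_space UNIV)"
  and Ymeas: "Y \<in> borel_measurable M"
  and nu: "finite_measure \<nu>" "sets \<nu> = sets borel"
  and law: "\<And>B S. B \<in> sets G \<Longrightarrow> S \<in> sets borel \<Longrightarrow>
        measure M (B \<inter> {w\<in>space M. a w = i} \<inter> (Y -` S \<inter> space M))
          = measure M (B \<inter> {w\<in>space M. a w = i}) * measure \<nu> S"
  and W: "W \<in> borel_measurable G"
  and psi: "\<psi> \<in> borel_measurable borel"
  shows "(\<integral>\<^sup>+w. W w * indicator {w\<in>space M. a w = i} w * \<psi> (Y w) \<partial>M)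
     = (\<integral>\<^sup>+w. W w * indicator {w\<in>space M. a w = i} w \<partial>M) * (\<integral>\<^sup>+y. \<psi> y \<partial>\<nu>)"
proof -
  interpret M: finite_measure M by fact
  interpret nu: finite_measure \<nu> by fact
  define Ai where "Ai = {w\<in>space M. a w = i}"
  have spG: "space G = space M" and setsG: "sets G \<subseteq> sets M" using sub by (auto simp: subalgebra_def)
  have AiG: "Ai \<in> sets G"
  proof -
    have "a -` {i} \<inter> space G \<in> sets G" using Ameas by (auto simp: measurable_def)
    then show ?thesis unfolding Ai_def using spG by (simp add: vimage_def Int_def conj_commute)
  qed
  have AiM: "Ai \<in> sets M" using AiG setsG by auto
  have indG: "indicator Ai \<in> borel_measurable G" using AiG by simp
  have indM: "(indicator Ai :: 'w \<Rightarrow> ennreal) \<in> borel_measurable M" using AiM by simp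
  define Md where "Md = density M (indicator Ai)"
  have spMd: "space Md = space M" and setsMd: "sets Md = sets M" by (simp_all add: Md_def)
  have subd: "subalgebra Md G" using sub by (auto simp: subalgebra_def Md_def)
  have emMd: "emeasure Md X = emeasure M (Ai \<inter> X)" if "X \<in> sets M" for X
    unfolding Md_def using that AiM
    by (subst emeasure_density) (auto simp: indicator_inter_arith[symmetric] intro!: nn_integral_indicator)
  have finMd: "finite_measure Md"
    by (rule finite_measureI) (simp add: spMd emMd AiM)
  define Mr where "Mr = restr_to_subalg Md G"
  have finMr: "finite_measure Mr" unfolding Mr_def by (rule finite_measure_restr_to_subalg[OF subd finMd])
  have setsMr: "sets Mr = sets G" unfolding Mr_def by (rule sets_restr_to_subalg[OF subd])
  have spMr: "space Mr = space M" unfolding Mr_def by (simp add: space_restr_to_subalg spMd)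
  have emMr: "emeasure Mr B = emeasure M (Ai \<inter> B)" if "B \<in> sets G" for B
    unfolding Mr_def using that setsG by (simp add: emeasure_restr_to_subalg[OF subd] emMd subset_iff)
  have idmeas: "(\<lambda>w. w) \<in> measurable Md Mr"
  proof -
    have "(\<lambda>w. w) \<in> measurable G Mr" by (rule measurable_ident_sets) (simp add: setsMr)
    then have "(\<lambda>w. w) \<in> measurable M Mr" by (rule measurable_from_subalg[OF sub])
    then show ?thesis by (simp add: Md_def)
  qed
  have Ymeas': "Y \<in> measurable Md \<nu>"
    using Ymeas measurable_cong_sets[OF setsMd nu(2)] by simp
  have pmeas: "(\<lambda>w. (w, Y w)) \<in> measurable Md (Mr \<Otimes>\<^sub>M \<nu>)"
    using idmeas Ymeas' by (rule measurable_Pair)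
  define Q where "Q = distr Md (Mr \<Otimes>\<^sub>M \<nu>) (\<lambda>w. (w, Y w))"
  have eqQ: "Mr \<Otimes>\<^sub>M \<nu> = Q"
  proof (rule pair_measure_eqI)
    show "sigma_finite_measure Mr" using finMr by (simp add: finite_measure_def)
    show "sigma_finite_measure \<nu>" using nu(1) by (simp add: finite_measure_def)
    show "sets (Mr \<Otimes>\<^sub>M \<nu>) = sets Q" by (simp add: Q_def)
    fix B S assume B: "B \<in> sets Mr" and S: "S \<in> sets \<nu>"
    have BG: "B \<in> sets G" using B setsMr by simp
    have BM: "B \<in> sets M" using BG setsG by auto
    have SB: "S \<in> sets borel" using S nu(2) by simp
    have YS: "Y -` S \<inter> space M \<in> sets M" using Ymeas SB by (simp add: measurable_sets)
    have "emeasure Q (B \<times> S) = emeasure Md ((\<lambda>w. (w, Y w)) -` (B \<times> S) \<inter> space Md)"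
      unfolding Q_def using pmeas B S by (simp add: emeasure_distr)
    also have "(\<lambda>w. (w, Y w)) -` (B \<times> S) \<inter> space Md = B \<inter> (Y -` S \<inter> space M)"
      using BM sets.sets_into_space by (auto simp: spMd)
    also have "emeasure Md (B \<inter> (Y -` S \<inter> space M)) = emeasure M (B \<inter> Ai \<inter> (Y -` S \<inter> space M))"
      using BM YS by (subst emMd) (auto simp: Int_ac)
    also have "\<dots> = ennreal (measure M (B \<inter> Ai) * measure \<nu> S)"
      using law[OF BG SB] by (simp add: M.emeasure_eq_measure Ai_def)
    also have "\<dots> = emeasure M (Ai \<inter> B) * emeasure \<nu> S"
      by (simp add: M.emeasure_eq_measure nu.emeasure_eq_measure ennreal_mult Int_commute)
    finally show "emeasure Mr B * emeasure \<nu> S = emeasure Q (B \<times> S)"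
      using emMr[OF BG] by simp
  qed
  interpret pair_sigma_finite Mr \<nu>
    using finMr nu(1) by (simp add: pair_sigma_finite_def finite_measure_def)
  have Wr: "W \<in> borel_measurable Mr" by (subst measurable_cong_sets[OF setsMr refl]) (rule W)
  have psinu: "\<psi> \<in> borel_measurable \<nu>" by (subst measurable_cong_sets[OF nu(2) refl]) (rule psi)
  have prodmeas: "(\<lambda>p. W (fst p) * \<psi> (snd p)) \<in> borel_measurable (Mr \<Otimes>\<^sub>M \<nu>)"
    using Wr psinu by measurable
  have WM: "W \<in> borel_measurable M" by (rule measurable_from_subalg[OF sub W])
  have psiY: "(\<lambda>w. \<psi> (Y w)) \<in> borel_measurable M" using psi Ymeas by (simp add: measurable_compose)
  have "(\<integral>\<^sup>+w. W w * indicator Ai w * \<psi> (Y w) \<partial>M) = (\<integral>\<^sup>+w. indicator Ai w * (W w * \<psi> (Y w)) \<partial>M)"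
    by (rule nn_integral_cong) (simp add: mult_ac)
  also have "\<dots> = (\<integral>\<^sup>+w. W w * \<psi> (Y w) \<partial>Md)"
    unfolding Md_def using WM psiY indM by (subst nn_integral_density) auto
  also have "\<dots> = (\<integral>\<^sup>+p. W (fst p) * \<psi> (snd p) \<partial>Q)"
    unfolding Q_def using pmeas prodmeas by (subst nn_integral_distr) auto
  also have "\<dots> = (\<integral>\<^sup>+p. W (fst p) * \<psi> (snd p) \<partial>(Mr \<Otimes>\<^sub>M \<nu>))" by (simp add: eqQ)
  also have "\<dots> = (\<integral>\<^sup>+x. \<integral>\<^sup>+y. W x * \<psi> y \<partial>\<nu> \<partial>Mr)"
    using prodmeas by (subst nu.nn_integral_fst[symmetric]) auto
  also have "\<dots> = (\<integral>\<^sup>+x. W x * (\<integral>\<^sup>+y. \<psi> y \<partial>\<nu>) \<partial>Mr)"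
    using psinu by (simp add: nn_integral_cmult)
  also have "\<dots> = (\<integral>\<^sup>+x. W x \<partial>Mr) * (\<integral>\<^sup>+y. \<psi> y \<partial>\<nu>)"
    using Wr by (simp add: nn_integral_multc)
  also have "(\<integral>\<^sup>+x. W x \<partial>Mr) = (\<integral>\<^sup>+x. W x \<partial>Md)"
    unfolding Mr_def by (rule nn_integral_subalgebra2[OF subd W])
  also have "\<dots> = (\<integral>\<^sup>+w. indicator Ai w * W w \<partial>M)"
    unfolding Md_def using WM indM by (subst nn_integral_density) auto
  also have "\<dots> = (\<integral>\<^sup>+w. W w * indicator Ai w \<partial>M)"
    by (simp add: mult_ac)
  finally show ?thesis unfolding Ai_def .
qed

definition cnt :: "(nat \<Rightarrow> 'w \<Rightarrow> nat) \<Rightarrow> nat \<Rightarrow> nat \<Rightarrow> nat \<Rightarrow> 'w \<Rightarrow> bool" where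
  "cnt A i n s w \<longleftrightarrow> A s w = i \<and> pulls A (s - 1) i w < n"

lemma pulls_real: "real (pulls A t i w) = (\<Sum>s\<in>{1..t}. if A s w = i then 1 else 0)"
  unfolding pulls_def by (simp add: sum.inter_filter[symmetric])

locale bandit =
  fixes M :: "'w measure" and F :: "nat \<Rightarrow> 'w measure"
    and A :: "nat \<Rightarrow> 'w \<Rightarrow> nat" and Y :: "nat \<Rightarrow> 'w \<Rightarrow> real ^ 'd"
    and \<nu> :: "nat \<Rightarrow> (real ^ 'd) measure" and K :: nat
  assumes nu_prob: "\<And>i. i < K \<Longrightarrow> prob_space (\<nu> i)"
    and nu_sets: "\<And>i. i < K \<Longrightarrow> sets (\<nu> i) = sets borel"
    and M: "prob_space M"
    and filt_sub: "\<And>t. subalgebra M (F t)"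
    and filt_mono: "\<And>s t. s \<le> t \<Longrightarrow> sets (F s) \<subseteq> sets (F t)"
    and A_meas: "\<And>t. t \<ge> 1 \<Longrightarrow> A t \<in> measurable (F (t - 1)) (count_space UNIV)"
    and Y_meas: "\<And>t. t \<ge> 1 \<Longrightarrow> Y t \<in> borel_measurable (F t)"
    and Y_law: "\<And>t i B S. t \<ge> 1 \<Longrightarrow> i < K \<Longrightarrow> B \<in> sets (F (t - 1)) \<Longrightarrow> S \<in> sets borel \<Longrightarrow>
        measure M (B \<inter> {w \<in> space M. A t w = i} \<inter> (Y t -` S \<inter> space M))
          = measure M (B \<inter> {w \<in> space M. A t w = i}) * measure (\<nu> i) S"
begin

lemma spF: "space (F t) = space M" using filt_sub[of t] by (simp add: subalgebra_def)

lemma meas_mono: "s \<le> t \<Longrightarrow> f \<in> measurable (F s) N \<Longrightarrow> f \<in> measurable (F t) N"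
  using filt_mono[of s t] by (auto simp: measurable_def spF)

lemma A_meas': "1 \<le> s \<Longrightarrow> s \<le> Suc h \<Longrightarrow> A s \<in> measurable (F h) (count_space UNIV)"
  by (rule meas_mono[OF _ A_meas]) auto

lemma A_pred: "1 \<le> s \<Longrightarrow> s \<le> Suc h \<Longrightarrow> {w \<in> space M. A s w = i} \<in> sets (F h)"
proof -
  assume "1 \<le> s" "s \<le> Suc h"
  from A_meas'[OF this] have "A s -` {i} \<inter> space (F h) \<in> sets (F h)" by (auto simp: measurable_def)
  then show ?thesis by (simp add: spF vimage_def Int_def conj_commute)
qed

lemma A_ind: "1 \<le> s \<Longrightarrow> s \<le> Suc h \<Longrightarrow> (\<lambda>w. if A s w = i then (1::real) else 0) \<in> borel_measurable (F h)"
proof -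
  assume a: "1 \<le> s" "s \<le> Suc h"
  have "(\<lambda>w. if A s w = i then (1::real) else 0) \<in> borel_measurable (F h) \<longleftrightarrow>
        (\<lambda>w. indicator {w \<in> space M. A s w = i} w :: real) \<in> borel_measurable (F h)"
    by (rule measurable_cong) (auto simp: spF indicator_def)
  then show ?thesis using A_pred[OF a] by simp
qed

lemma pulls_meas: "t \<le> Suc h \<Longrightarrow> (\<lambda>w. real (pulls A t i w)) \<in> borel_measurable (F h)"
  unfolding pulls_real
  by (rule borel_measurable_sum) (rule A_ind, auto)

lemma cnt_ind: "1 \<le> s \<Longrightarrow> s \<le> Suc h \<Longrightarrow> {w \<in> space M. cnt A i n s w} \<in> sets (F h)"
proof -
  assume a: "1 \<le> s" "s \<le> Suc h"
  have "{w \<in> space M. cnt A i n s w} = {w \<in> space M. A s w = i} \<inter> ((\<lambda>w. real (pulls A (s - 1) i w)) -` {..<real n} \<inter> space (F h))"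
    by (auto simp: cnt_def spF)
  also have "\<dots> \<in> sets (F h)"
  proof (rule sets.Int[OF A_pred[OF a]])
    show "(\<lambda>w. real (pulls A (s - 1) i w)) -` {..<real n} \<inter> space (F h) \<in> sets (F h)"
      by (rule measurable_sets[OF pulls_meas]) (use a in auto)
  qed
  finally show ?thesis .
qed

lemma cntf_meas:
  assumes "1 \<le> s" "s \<le> Suc h" "f \<in> borel_measurable (F h)"
  shows "(\<lambda>w. if cnt A i n s w then f w else 0::real) \<in> borel_measurable (F h)"
proof -
  have "(\<lambda>w. if cnt A i n s w then f w else 0::real) \<in> borel_measurable (F h) \<longleftrightarrow>
        (\<lambda>w. indicator {w \<in> space M. cnt A i n s w} w * f w :: real) \<in> borel_measurable (F h)"
    by (rule measurable_cong) (auto simp: spF indicator_def)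
  then show ?thesis using cnt_ind[OF assms(1,2), of i n] assms(3) by simp
qed

lemma Y_meas': "1 \<le> s \<Longrightarrow> s \<le> h \<Longrightarrow> Y s \<in> borel_measurable (F h)"
  by (rule meas_mono[OF _ Y_meas]) auto

lemma Sz_meas: "(\<lambda>w. \<Sum>s\<in>{1..h}. if cnt A i n s w then Y s w \<bullet> z - cc else 0) \<in> borel_measurable (F h)"
proof (rule borel_measurable_sum)
  fix s assume "s \<in> {1..h}"
  then have s: "1 \<le> s" "s \<le> h" by auto
  have "(\<lambda>w. Y s w \<bullet> z - cc) \<in> borel_measurable (F h)"
    using Y_meas'[OF s] by measurable
  then show "(\<lambda>w. if cnt A i n s w then Y s w \<bullet> z - cc else 0) \<in> borel_measurable (F h)"
    using s by (intro cntf_meas) auto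
qed

lemma mc_meas: "(\<lambda>w. \<Sum>s\<in>{1..h}. if cnt A i n s w then 1 else 0::real) \<in> borel_measurable (F h)"
proof (rule borel_measurable_sum)
  fix s assume "s \<in> {1..h}"
  then have s: "1 \<le> s" "s \<le> h" by auto
  then show "(\<lambda>w. if cnt A i n s w then 1 else 0::real) \<in> borel_measurable (F h)"
    by (intro cntf_meas) auto
qed

lemma FM: "f \<in> measurable (F h) N \<Longrightarrow> f \<in> measurable M N"
  by (rule measurable_from_subalg[OF filt_sub])

lemma mart_le:
  assumes i: "i < K" and sg: "subgaussian (\<nu> i) (\<lambda>x. x \<bullet> z) \<sigma>"
  defines "m0 \<equiv> \<integral>x. x \<bullet> z \<partial>\<nu> i"
  shows "(\<integral>\<^sup>+w. ennreal (exp (l * (\<Sum>s\<in>{1..h}. if cnt A i n s w then Y s w \<bullet> z - m0 else 0)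
            - l\<^sup>2 * \<sigma>\<^sup>2 / 2 * (\<Sum>s\<in>{1..h}. if cnt A i n s w then 1 else 0))) \<partial>M) \<le> 1"
proof (induction h)
  case 0
  interpret prob_space M by (rule M)
  show ?case by (simp add: emeasure_space_1)
next
  case (Suc h)
  interpret prob_space M by (rule M)
  define Mh where "Mh w = exp (l * (\<Sum>s\<in>{1..h}. if cnt A i n s w then Y s w \<bullet> z - m0 else 0)
            - l\<^sup>2 * \<sigma>\<^sup>2 / 2 * (\<Sum>s\<in>{1..h}. if cnt A i n s w then 1 else 0))" for w
  have Mh_meas: "Mh \<in> borel_measurable (F h)"
    unfolding Mh_def using Sz_meas[where h=h and i=i and n=n and z=z and cc=m0] mc_meas[where h=h and i=i and n=n] by measurable
  define C where "C = {w \<in> space M. cnt A i n (Suc h) w}"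
  define Ai where "Ai = {w \<in> space M. A (Suc h) w = i}"
  define P where "P = {w \<in> space M. pulls A h i w < n}"
  have CF: "C \<in> sets (F h)" unfolding C_def by (rule cnt_ind) auto
  have CM: "C \<in> sets M" using CF filt_sub[of h] by (auto simp: subalgebra_def)
  have PF: "P \<in> sets (F h)"
  proof -
    have "P = (\<lambda>w. real (pulls A h i w)) -` {..<real n} \<inter> space (F h)"
      by (auto simp: P_def spF)
    also have "\<dots> \<in> sets (F h)" by (rule measurable_sets[OF pulls_meas]) auto
    finally show ?thesis .
  qed
  have CAP: "C = P \<inter> Ai" by (auto simp: C_def P_def Ai_def cnt_def)
  define g where "g w = exp (l * (Y (Suc h) w \<bullet> z - m0))" for w
  define c where "c = exp (- (l\<^sup>2 * \<sigma>\<^sup>2 / 2))"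
  have YM: "Y (Suc h) \<in> borel_measurable M" using Y_meas[of "Suc h"] by (intro FM) auto
  have g_meas: "g \<in> borel_measurable M" unfolding g_def using YM by measurable
  have MhM: "Mh \<in> borel_measurable M" using Mh_meas by (rule FM)
  have split: "ennreal (exp (l * (\<Sum>s\<in>{1..Suc h}. if cnt A i n s w then Y s w \<bullet> z - m0 else 0)
            - l\<^sup>2 * \<sigma>\<^sup>2 / 2 * (\<Sum>s\<in>{1..Suc h}. if cnt A i n s w then 1 else 0)))
        = ennreal (Mh w) * indicator (space M - C) w
          + (ennreal (Mh w) * indicator P w * ennreal c) * indicator Ai w * ennreal (g w)"
    if w: "w \<in> space M" for w
  proof (cases "cnt A i n (Suc h) w")
    case True
    then have "w \<in> C" "w \<in> P" "w \<in> Ai" using w CAP by (auto simp: C_def)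
    moreover have "exp (l * ((\<Sum>s\<in>{1..h}. if cnt A i n s w then Y s w \<bullet> z - m0 else 0) + (Y (Suc h) w \<bullet> z - m0))
            - l\<^sup>2 * \<sigma>\<^sup>2 / 2 * ((\<Sum>s\<in>{1..h}. if cnt A i n s w then 1 else 0) + 1))
          = Mh w * c * g w"
      unfolding Mh_def c_def g_def by (simp add: exp_add[symmetric] exp_diff algebra_simps)
    moreover have "0 \<le> Mh w" "0 \<le> c" "0 \<le> g w" by (simp_all add: Mh_def c_def g_def)
    ultimately show ?thesis using True
      by (simp add: ennreal_mult mult_ac)
  next
    case False
    then have "w \<notin> C" using w by (auto simp: C_def)
    then have "w \<notin> P \<or> w \<notin> Ai" using CAP by auto
    then show ?thesis using False w \<open>w \<notin> C\<close> by (auto simp: Mh_def)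
  qed
  have nu_int: "(\<integral>\<^sup>+y. ennreal (exp (l * (y \<bullet> z - m0))) \<partial>\<nu> i) \<le> ennreal (exp (l\<^sup>2 * \<sigma>\<^sup>2 / 2))"
  proof -
    have int: "integrable (\<nu> i) (\<lambda>x. exp (l * (x \<bullet> z - m0)))"
     and le: "(\<integral>x. exp (l * (x \<bullet> z - m0)) \<partial>\<nu> i) \<le> exp (l\<^sup>2 * \<sigma>\<^sup>2 / 2)"
      using sg unfolding subgaussian_def m0_def by auto
    have "(\<integral>\<^sup>+y. ennreal (exp (l * (y \<bullet> z - m0))) \<partial>\<nu> i) = ennreal (\<integral>x. exp (l * (x \<bullet> z - m0)) \<partial>\<nu> i)"
      using int by (intro nn_integral_eq_integral) auto
    then show ?thesis using le by (simp add: ennreal_leI)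
  qed
  have KLa: "(\<integral>\<^sup>+w. (ennreal (Mh w) * indicator P w * ennreal c) * indicator Ai w * ennreal (g w) \<partial>M)
      = (\<integral>\<^sup>+w. (ennreal (Mh w) * indicator P w * ennreal c) * indicator Ai w \<partial>M)
         * (\<integral>\<^sup>+y. ennreal (exp (l * (y \<bullet> z - m0))) \<partial>\<nu> i)"
    unfolding Ai_def g_def
  proof (rule KL[where G="F h" and a="A (Suc h)" and Y="Y (Suc h)" and \<nu>="\<nu> i"
        and \<psi>="\<lambda>y. ennreal (exp (l * (y \<bullet> z - m0)))"])
    show "finite_measure M" by (rule finite_measure_axioms)
    show "subalgebra M (F h)" by (rule filt_sub)
    show "A (Suc h) \<in> measurable (F h) (count_space UNIV)" using A_meas[of "Suc h"] by simp
    show "Y (Suc h) \<in> borel_measurable M" by (rule YM)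
    show "finite_measure (\<nu> i)" using nu_prob[OF i] by (simp add: prob_space_def)
    show "sets (\<nu> i) = sets borel" using nu_sets[OF i] .
    show "\<And>B S. B \<in> sets (F h) \<Longrightarrow> S \<in> sets borel \<Longrightarrow>
        measure M (B \<inter> {w\<in>space M. A (Suc h) w = i} \<inter> (Y (Suc h) -` S \<inter> space M))
          = measure M (B \<inter> {w\<in>space M. A (Suc h) w = i}) * measure (\<nu> i) S"
      using Y_law[of "Suc h" i] i by simp
    show "(\<lambda>w. ennreal (Mh w) * indicator P w * ennreal c) \<in> borel_measurable (F h)"
      using Mh_meas PF by measurable
    show "(\<lambda>y. ennreal (exp (l * (y \<bullet> z - m0)))) \<in> borel_measurable borel" by measurable
  qed
  have AiM: "Ai \<in> sets M" using A_pred[of "Suc h" h i] filt_sub[of h] by (auto simp: subalgebra_def Ai_def)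
  have PM: "P \<in> sets M" using PF filt_sub[of h] by (auto simp: subalgebra_def)
  note [measurable] = MhM g_meas CM PM AiM
  have ce: "ennreal c * ennreal (exp (l\<^sup>2 * \<sigma>\<^sup>2 / 2)) = 1"
    by (simp add: c_def ennreal_mult[symmetric] exp_add[symmetric])
  have "(\<integral>\<^sup>+w. ennreal (exp (l * (\<Sum>s\<in>{1..Suc h}. if cnt A i n s w then Y s w \<bullet> z - m0 else 0)
            - l\<^sup>2 * \<sigma>\<^sup>2 / 2 * (\<Sum>s\<in>{1..Suc h}. if cnt A i n s w then 1 else 0))) \<partial>M)
     = (\<integral>\<^sup>+w. ennreal (Mh w) * indicator (space M - C) w
          + (ennreal (Mh w) * indicator P w * ennreal c) * indicator Ai w * ennreal (g w) \<partial>M)"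
    by (intro nn_integral_cong split)
  also have "\<dots> = (\<integral>\<^sup>+w. ennreal (Mh w) * indicator (space M - C) w \<partial>M)
      + (\<integral>\<^sup>+w. (ennreal (Mh w) * indicator P w * ennreal c) * indicator Ai w * ennreal (g w) \<partial>M)"
    by (intro nn_integral_add) measurable
  also have "\<dots> \<le> (\<integral>\<^sup>+w. ennreal (Mh w) * indicator (space M - C) w \<partial>M)
      + (\<integral>\<^sup>+w. ennreal (Mh w) * indicator C w \<partial>M)"
  proof (rule add_left_mono)
    have "(\<integral>\<^sup>+w. (ennreal (Mh w) * indicator P w * ennreal c) * indicator Ai w * ennreal (g w) \<partial>M)
       \<le> (\<integral>\<^sup>+w. (ennreal (Mh w) * indicator P w * ennreal c) * indicator Ai w \<partial>M)
         * ennreal (exp (l\<^sup>2 * \<sigma>\<^sup>2 / 2))"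
      unfolding KLa by (rule mult_left_mono[OF nu_int]) simp
    also have "\<dots> = (\<integral>\<^sup>+w. (ennreal (Mh w) * indicator P w * ennreal c) * indicator Ai w
         * ennreal (exp (l\<^sup>2 * \<sigma>\<^sup>2 / 2)) \<partial>M)"
      by (rule nn_integral_multc[symmetric]) measurable
    also have "\<dots> = (\<integral>\<^sup>+w. ennreal (Mh w) * indicator C w \<partial>M)"
    proof (rule nn_integral_cong)
      fix w assume "w \<in> space M"
      have "(ennreal (Mh w) * indicator P w * ennreal c) * indicator Ai w * ennreal (exp (l\<^sup>2 * \<sigma>\<^sup>2 / 2))
          = ennreal (Mh w) * (indicator P w * indicator Ai w) * (ennreal c * ennreal (exp (l\<^sup>2 * \<sigma>\<^sup>2 / 2)))"
        by (simp add: mult_ac)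
      also have "\<dots> = ennreal (Mh w) * indicator C w"
        unfolding ce CAP by (simp add: indicator_inter_arith)
      finally show "(ennreal (Mh w) * indicator P w * ennreal c) * indicator Ai w * ennreal (exp (l\<^sup>2 * \<sigma>\<^sup>2 / 2))
          = ennreal (Mh w) * indicator C w" .
    qed
    finally show "(\<integral>\<^sup>+w. (ennreal (Mh w) * indicator P w * ennreal c) * indicator Ai w * ennreal (g w) \<partial>M)
       \<le> (\<integral>\<^sup>+w. ennreal (Mh w) * indicator C w \<partial>M)" .
  qed
  also have "\<dots> = (\<integral>\<^sup>+w. ennreal (Mh w) * indicator (space M - C) w + ennreal (Mh w) * indicator C w \<partial>M)"
    by (rule nn_integral_add[symmetric]) measurable
  also have "\<dots> = (\<integral>\<^sup>+w. ennreal (Mh w) \<partial>M)"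
    by (rule nn_integral_cong) (auto simp: indicator_def C_def)
  also have "\<dots> \<le> 1" using Suc.IH unfolding Mh_def .
  finally show ?case .
qed

end

definition Svec :: "(nat \<Rightarrow> 'w \<Rightarrow> nat) \<Rightarrow> (nat \<Rightarrow> 'w \<Rightarrow> real ^ 'd) \<Rightarrow> real ^ 'd \<Rightarrow> nat \<Rightarrow> nat \<Rightarrow> nat \<Rightarrow> 'w \<Rightarrow> real ^ 'd" where
  "Svec A Y \<mu> i n h w = (\<Sum>s\<in>{1..h}. if cnt A i n s w then Y s w - \<mu> else 0)"

lemma pulls_Suc: "pulls A (Suc t) i w = pulls A t i w + (if A (Suc t) w = i then 1 else 0)"
proof -
  have "real (pulls A (Suc t) i w) = real (pulls A t i w) + (if A (Suc t) w = i then 1 else 0)"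
    by (simp add: pulls_real)
  then show ?thesis by (simp split: if_splits)
qed

lemma mc_eq: "(\<Sum>s\<in>{1..h}. if cnt A i n s w then 1 else 0::real) = real (min (pulls A h i w) n)"
proof (induction h)
  case 0 then show ?case by (simp add: pulls_def)
next
  case (Suc h)
  show ?case using Suc.IH by (auto simp: pulls_Suc cnt_def)
qed

lemma subgaussian_neg: "subgaussian M X \<sigma> \<Longrightarrow> subgaussian M (\<lambda>x. - X x) \<sigma>"
  unfolding subgaussian_def
proof (intro conjI allI; elim conjE)
  assume int: "integrable M X" and h: "\<forall>l. integrable M (\<lambda>x. exp (l * (X x - (\<integral>y. X y \<partial>M)))) \<and>
     (\<integral>x. exp (l * (X x - (\<integral>y. X y \<partial>M))) \<partial>M) \<le> exp (l\<^sup>2 * \<sigma>\<^sup>2 / 2)"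
  show "integrable M (\<lambda>x. - X x)" using int by simp
  fix l :: real
  have e: "(\<lambda>x. exp (l * (- X x - (\<integral>y. - X y \<partial>M)))) = (\<lambda>x. exp ((-l) * (X x - (\<integral>y. X y \<partial>M))))"
    by (auto simp: algebra_simps)
  show "integrable M (\<lambda>x. exp (l * (- X x - (\<integral>y. - X y \<partial>M))))" unfolding e using h by blast
  show "(\<integral>x. exp (l * (- X x - (\<integral>y. - X y \<partial>M))) \<partial>M) \<le> exp (l\<^sup>2 * \<sigma>\<^sup>2 / 2)"
    unfolding e using h[rule_format, of "-l"] by simp
qed

context bandit
begin

lemma mean_inner:
  assumes i: "i < K" and mg: "\<And>c. subgaussian (\<nu> i) (\<lambda>x. x $ c) \<sigma>"
  shows "(\<integral>x. x \<bullet> z \<partial>\<nu> i) = mean_vec (\<nu> i) \<bullet> z"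
proof -
  have int: "integrable (\<nu> i) (\<lambda>x. x $ c)" for c using mg[of c] by (simp add: subgaussian_def)
  have "(\<integral>x. x \<bullet> z \<partial>\<nu> i) = (\<integral>x. (\<Sum>c\<in>UNIV. x $ c * z $ c) \<partial>\<nu> i)"
    by (simp add: inner_vec_def)
  also have "\<dots> = (\<Sum>c\<in>UNIV. (\<integral>x. x $ c * z $ c \<partial>\<nu> i))"
    using int by simp
  also have "\<dots> = (\<Sum>c\<in>UNIV. (\<integral>x. x $ c \<partial>\<nu> i) * z $ c)"
    by simp
  also have "\<dots> = mean_vec (\<nu> i) \<bullet> z"
    by (simp add: inner_vec_def mean_vec_def)
  finally show ?thesis .
qed

lemma Svec_meas: "Svec A Y \<mu> i n h \<in> borel_measurable M"
proof -
  have "Svec A Y \<mu> i n h \<in> borel_measurable (F h)"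
    unfolding Svec_def
  proof (rule borel_measurable_sum)
    fix s assume "s \<in> {1..h}"
    then have s: "1 \<le> s" "s \<le> h" by auto
    have "(\<lambda>w. if cnt A i n s w then Y s w - \<mu> else 0) \<in> borel_measurable (F h) \<longleftrightarrow>
        (\<lambda>w. indicator {w \<in> space M. cnt A i n s w} w *\<^sub>R (Y s w - \<mu>)) \<in> borel_measurable (F h)"
      by (rule measurable_cong) (auto simp: spF indicator_def)
    moreover have "{w \<in> space M. cnt A i n s w} \<in> sets (F h)" using s by (intro cnt_ind) auto
    moreover have "Y s \<in> borel_measurable (F h)" using s by (rule Y_meas')
    ultimately show "(\<lambda>w. if cnt A i n s w then Y s w - \<mu> else 0) \<in> borel_measurable (F h)"
      by simp
  qed
  then show ?thesis by (rule FM)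
qed

lemma chernoff:
  assumes i: "i < K" and sg: "subgaussian (\<nu> i) (\<lambda>x. x \<bullet> z) \<sigma>" and sig: "\<sigma> > 0"
    and mg: "\<And>c. subgaussian (\<nu> i) (\<lambda>x. x $ c) \<sigma>'"
    and n: "n \<ge> 1" and a: "a \<ge> 0"
  shows "measure M {w \<in> space M. a \<le> Svec A Y (mean_vec (\<nu> i)) i n h w \<bullet> z}
           \<le> exp (- (a\<^sup>2 / (2 * real n * \<sigma>\<^sup>2)))"
proof -
  interpret prob_space M by (rule M)
  define m0 where "m0 = (\<integral>x. x \<bullet> z \<partial>\<nu> i)"
  have m0: "m0 = mean_vec (\<nu> i) \<bullet> z" unfolding m0_def by (rule mean_inner[OF i mg])
  define l where "l = a / (real n * \<sigma>\<^sup>2)"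
  have l0: "l \<ge> 0" unfolding l_def using a n sig by simp
  define Sz where "Sz w = (\<Sum>s\<in>{1..h}. if cnt A i n s w then Y s w \<bullet> z - m0 else 0)" for w
  define mc where "mc w = (\<Sum>s\<in>{1..h}. if cnt A i n s w then 1 else 0::real)" for w
  have SzS: "Svec A Y (mean_vec (\<nu> i)) i n h w \<bullet> z = Sz w" for w
    unfolding Svec_def Sz_def m0 by (auto simp: inner_sum_left inner_diff_left intro!: sum.cong)
  have mcn: "mc w \<le> real n" for w unfolding mc_def mc_eq by simp
  have mart: "(\<integral>\<^sup>+w. ennreal (exp (l * Sz w - l\<^sup>2 * \<sigma>\<^sup>2 / 2 * mc w)) \<partial>M) \<le> 1"
    unfolding Sz_def mc_def m0_def by (rule mart_le[OF i sg])
  have Szm: "Sz \<in> borel_measurable M"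
  proof -
    have "(\<lambda>w. Svec A Y (mean_vec (\<nu> i)) i n h w \<bullet> z) \<in> borel_measurable M"
      using Svec_meas[of "mean_vec (\<nu> i)" i n h] by measurable
    then show ?thesis by (simp add: SzS)
  qed
  have mcm: "mc \<in> borel_measurable M"
    unfolding mc_def using mc_meas[where h=h and i=i and n=n] by (rule FM)
  let ?S = "{w \<in> space M. a \<le> Sz w}"
  have Sm: "?S \<in> sets M" using Szm by measurable
  have "emeasure M ?S = (\<integral>\<^sup>+w. indicator ?S w \<partial>M)" using Sm by simp
  also have "\<dots> \<le> (\<integral>\<^sup>+w. ennreal (exp (l * Sz w - l\<^sup>2 * \<sigma>\<^sup>2 / 2 * mc w)) * ennreal (exp (l\<^sup>2 * \<sigma>\<^sup>2 / 2 * real n - l * a)) \<partial>M)"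
  proof (rule nn_integral_mono)
    fix w assume w: "w \<in> space M"
    show "indicator ?S w \<le> ennreal (exp (l * Sz w - l\<^sup>2 * \<sigma>\<^sup>2 / 2 * mc w)) * ennreal (exp (l\<^sup>2 * \<sigma>\<^sup>2 / 2 * real n - l * a))"
    proof (cases "w \<in> ?S")
      case True
      then have "l * a \<le> l * Sz w" using l0 by (simp add: mult_left_mono)
      moreover have "l\<^sup>2 * \<sigma>\<^sup>2 / 2 * mc w \<le> l\<^sup>2 * \<sigma>\<^sup>2 / 2 * real n"
        using mcn[of w] by (intro mult_left_mono) auto
      ultimately have "0 \<le> (l * Sz w - l\<^sup>2 * \<sigma>\<^sup>2 / 2 * mc w) + (l\<^sup>2 * \<sigma>\<^sup>2 / 2 * real n - l * a)" by linarith
      then have "1 \<le> exp (l * Sz w - l\<^sup>2 * \<sigma>\<^sup>2 / 2 * mc w) * exp (l\<^sup>2 * \<sigma>\<^sup>2 / 2 * real n - l * a)"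
        by (simp add: exp_add[symmetric])
      then show ?thesis using True by (simp add: ennreal_mult[symmetric])
    qed simp
  qed
  also have "\<dots> = (\<integral>\<^sup>+w. ennreal (exp (l * Sz w - l\<^sup>2 * \<sigma>\<^sup>2 / 2 * mc w)) \<partial>M) * ennreal (exp (l\<^sup>2 * \<sigma>\<^sup>2 / 2 * real n - l * a))"
    using Szm mcm by (intro nn_integral_multc) (intro measurable_compose[OF _ measurable_ennreal] borel_measurable_exp borel_measurable_diff borel_measurable_times; simp)
  also have "\<dots> \<le> 1 * ennreal (exp (l\<^sup>2 * \<sigma>\<^sup>2 / 2 * real n - l * a))"
    by (rule mult_right_mono[OF mart]) simp
  also have "l\<^sup>2 * \<sigma>\<^sup>2 / 2 * real n - l * a = - (a\<^sup>2 / (2 * real n * \<sigma>\<^sup>2))"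
    unfolding l_def using n sig by (simp add: field_simps power2_eq_square)
  finally have "emeasure M ?S \<le> ennreal (exp (- (a\<^sup>2 / (2 * real n * \<sigma>\<^sup>2))))" by simp
  then have "measure M ?S \<le> exp (- (a\<^sup>2 / (2 * real n * \<sigma>\<^sup>2)))"
    by (simp add: emeasure_eq_measure)
  then show ?thesis by (simp add: SzS)
qed

end

lemma net_card:
  fixes Z :: "(real ^ 'd) set"
  assumes fin: "finite Z" and unit: "\<forall>z\<in>Z. norm z = 1"
    and sep: "\<forall>z\<in>Z. \<forall>z'\<in>Z. z \<noteq> z' \<longrightarrow> dist z z' > 1/2"
  shows "card Z \<le> 5 ^ CARD('d)"
proof -
  define d where "d = CARD('d)"
  define V where "V = unit_ball_vol (real d)"
  have DIM: "DIM(real ^ 'd) = d" by (simp add: d_def)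
  have Vpos: "V > 0" unfolding V_def by simp
  have eb: "emeasure lborel (ball (c::real^'d) r) = ennreal (V * r ^ d)" if "r \<ge> 0" for c r
    using emeasure_ball[OF that, of c] by (simp add: V_def d_def)
  have disj: "disjoint_family_on (\<lambda>z. ball z (1/4)) Z"
    unfolding disjoint_family_on_def
  proof (intro ballI impI)
    fix z z' assume "z \<in> Z" "z' \<in> Z" "z \<noteq> z'"
    then have "dist z z' > 1/2" using sep by auto
    show "ball z (1/4) \<inter> ball z' (1/4) = {}"
    proof (rule ccontr)
      assume "ball z (1/4) \<inter> ball z' (1/4) \<noteq> {}"
      then obtain y where y: "dist z y < 1/4" "dist z' y < 1/4" by auto
      have "dist z z' \<le> dist z y + dist z' y" by (metis dist_commute dist_triangle)
      then show False using y \<open>dist z z' > 1/2\<close> by linarith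
    qed
  qed
  have "(\<Sum>z\<in>Z. emeasure lborel (ball z (1/4))) = emeasure lborel (\<Union>z\<in>Z. ball z (1/4))"
    by (rule sum_emeasure) (use disj fin in auto)
  also have "\<dots> \<le> emeasure lborel (ball (0::real^'d) (5/4))"
  proof (rule emeasure_mono)
    show "(\<Union>z\<in>Z. ball z (1/4)) \<subseteq> ball 0 (5/4)"
    proof
      fix y assume "y \<in> (\<Union>z\<in>Z. ball z (1/4))"
      then obtain z where z: "z \<in> Z" "dist z y < 1/4" by auto
      have "norm y \<le> norm z + dist z y" by (metis dist_norm norm_triangle_sub dist_commute)
      then show "y \<in> ball 0 (5/4)" using z unit by auto
    qed
  qed auto
  finally have "ennreal (real (card Z) * (V * (1/4) ^ d)) \<le> ennreal (V * (5/4) ^ d)"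
    by (simp add: eb ennreal_of_nat_eq_real_of_nat ennreal_mult'[symmetric])
  then have "real (card Z) * (V * (1/4) ^ d) \<le> V * (5/4) ^ d"
    using Vpos by (subst (asm) ennreal_le_iff) auto
  then have "real (card Z) * (1/4) ^ d \<le> (5/4) ^ d" using Vpos by (simp add: mult_ac)
  then have "real (card Z) * (1/4) ^ d * 4 ^ d \<le> (5/4) ^ d * 4 ^ d" by (simp add: mult_right_mono)
  moreover have "real (card Z) * (1/4) ^ d * 4 ^ d = real (card Z)"
    by (simp add: power_mult_distrib[symmetric] mult.assoc)
  moreover have "((5::real)/4) ^ d * 4 ^ d = 5 ^ d"
    by (simp add: power_mult_distrib[symmetric])
  ultimately have "real (card Z) \<le> 5 ^ d" by simp
  then show ?thesis unfolding d_def by (metis of_nat_le_iff of_nat_numeral of_nat_power)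
qed

lemma net_exists:
  "\<exists>Z :: (real ^ 'd) set. finite Z \<and> card Z \<le> 5 ^ CARD('d) \<and> (\<forall>z\<in>Z. norm z = 1)
       \<and> (\<forall>x. \<exists>z\<in>Z. norm x \<le> 2 * (x \<bullet> z))"
proof -
  define P where "P Z \<longleftrightarrow> finite Z \<and> (\<forall>z\<in>Z. norm (z::real^'d) = 1) \<and> (\<forall>z\<in>Z. \<forall>z'\<in>Z. z \<noteq> z' \<longrightarrow> dist z z' > 1/2)" for Z
  have "P {}" by (simp add: P_def)
  moreover have "\<forall>Z. P Z \<longrightarrow> card Z < 5 ^ CARD('d) + 1"
    using net_card unfolding P_def by (metis less_Suc_eq_le Suc_eq_plus1)
  ultimately obtain Z where PZ: "P Z" and maxZ: "\<And>Z'. P Z' \<Longrightarrow> card Z' \<le> card Z"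
    using ex_has_greatest_nat[of P "{}" card] by blast
  have fin: "finite Z" and unit: "\<forall>z\<in>Z. norm z = 1" using PZ by (auto simp: P_def)
  have cover: "\<exists>z\<in>Z. dist u z \<le> 1/2" if u: "norm u = 1" for u
  proof (rule ccontr)
    assume "\<not> ?thesis"
    then have far: "\<forall>z\<in>Z. dist u z > 1/2" by auto
    then have uZ: "u \<notin> Z" by auto
    have "P (insert u Z)" using PZ far u unfolding P_def by (auto simp: dist_commute)
    then have "card (insert u Z) \<le> card Z" by (rule maxZ)
    then show False using uZ fin by simp
  qed
  have main: "\<exists>z\<in>Z. norm x \<le> 2 * (x \<bullet> z)" for x
  proof (cases "x = 0")
    case True
    obtain z where "z \<in> Z" using cover[of "axis undefined 1"] by auto
    then show ?thesis using True by auto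
  next
    case False
    define u where "u = x /\<^sub>R norm x"
    have nu: "norm u = 1" using False by (simp add: u_def)
    obtain z where z: "z \<in> Z" "dist u z \<le> 1/2" using cover[OF nu] by auto
    have nz: "norm z = 1" using z unit by auto
    have "(dist u z)\<^sup>2 = (norm u)\<^sup>2 - 2 * (u \<bullet> z) + (norm z)\<^sup>2"
      by (simp add: dist_norm power2_norm_eq_inner inner_diff_left inner_diff_right inner_commute)
    then have uz: "u \<bullet> z = 1 - (dist u z)\<^sup>2 / 2" using nu nz by (simp add: field_simps)
    have "(dist u z)\<^sup>2 \<le> (1/2)\<^sup>2" using z(2) by (intro power_mono) auto
    then have "u \<bullet> z \<ge> 1/2" using uz by (simp add: power2_eq_square)
    moreover have "x \<bullet> z = norm x * (u \<bullet> z)" using False by (simp add: u_def)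
    moreover have "norm x * 1 \<le> norm x * (2 * (u \<bullet> z))"
      using \<open>u \<bullet> z \<ge> 1/2\<close> by (intro mult_left_mono) auto
    ultimately have "norm x \<le> 2 * (x \<bullet> z)" by (simp add: mult_ac)
    then show ?thesis using z(1) by blast
  qed
  show ?thesis
  proof (intro exI conjI)
    show "finite Z" by (rule fin)
    show "card Z \<le> 5 ^ CARD('d)" using net_card PZ unfolding P_def by blast
    show "\<forall>z\<in>Z. norm z = 1" by (rule unit)
    show "\<forall>x. \<exists>z\<in>Z. norm x \<le> 2 * (x \<bullet> z)" using main by blast
  qed
qed

context bandit
begin

lemma coord_bound:
  assumes i: "i < K" and sig: "\<sigma> > 0" and mg: "\<And>c. subgaussian (\<nu> i) (\<lambda>x. x $ c) \<sigma>"
    and n: "n \<ge> 1" and a: "a \<ge> 0"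
  shows "measure M {w \<in> space M. \<exists>c. a < \<bar>Svec A Y (mean_vec (\<nu> i)) i n h w $ c\<bar>}
           \<le> 2 * real CARD('d) * exp (- (a\<^sup>2 / (2 * real n * \<sigma>\<^sup>2)))"
proof -
  interpret prob_space M by (rule M)
  let ?S = "Svec A Y (mean_vec (\<nu> i)) i n h"
  have [measurable]: "?S \<in> borel_measurable M" by (rule Svec_meas)
  define B where "B z = {w \<in> space M. a \<le> ?S w \<bullet> z}" for z
  have Bm: "B z \<in> sets M" for z unfolding B_def by measurable
  have Bb: "measure M (B z) \<le> exp (- (a\<^sup>2 / (2 * real n * \<sigma>\<^sup>2)))"
    if "subgaussian (\<nu> i) (\<lambda>x. x \<bullet> z) \<sigma>" for z
    unfolding B_def by (rule chernoff[OF i that sig mg n a])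
  have sg1: "subgaussian (\<nu> i) (\<lambda>x. x \<bullet> axis c 1) \<sigma>" for c
    using mg[of c] by (simp add: inner_axis)
  have sg2: "subgaussian (\<nu> i) (\<lambda>x. x \<bullet> (- axis c 1)) \<sigma>" for c
    using subgaussian_neg[OF mg[of c]] by (simp add: inner_axis)
  have sub: "{w \<in> space M. \<exists>c. a < \<bar>?S w $ c\<bar>} \<subseteq> (\<Union>c\<in>UNIV. B (axis c 1) \<union> B (- axis c 1))"
  proof
    fix w assume "w \<in> {w \<in> space M. \<exists>c. a < \<bar>?S w $ c\<bar>}"
    then obtain c where w: "w \<in> space M" "a < \<bar>?S w $ c\<bar>" by auto
    then have "a \<le> ?S w \<bullet> axis c 1 \<or> a \<le> ?S w \<bullet> (- axis c 1)"
      by (auto simp: inner_axis abs_real_def split: if_splits)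
    then show "w \<in> (\<Union>c\<in>UNIV. B (axis c 1) \<union> B (- axis c 1))" using w by (auto simp: B_def)
  qed
  have "measure M {w \<in> space M. \<exists>c. a < \<bar>?S w $ c\<bar>} \<le> measure M (\<Union>c\<in>UNIV. B (axis c 1) \<union> B (- axis c 1))"
    using Bm by (intro finite_measure_mono[OF sub]) auto
  also have "\<dots> \<le> (\<Sum>c\<in>UNIV. measure M (B (axis c 1) \<union> B (- axis c 1)))"
    using Bm by (intro finite_measure_subadditive_finite) auto
  also have "\<dots> \<le> (\<Sum>c\<in>(UNIV::'d set). 2 * exp (- (a\<^sup>2 / (2 * real n * \<sigma>\<^sup>2))))"
  proof (rule sum_mono)
    fix c :: 'd
    have "measure M (B (axis c 1) \<union> B (- axis c 1)) \<le> measure M (B (axis c 1)) + measure M (B (- axis c 1))"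
      using Bm by (intro measure_Un_le) auto
    also have "\<dots> \<le> 2 * exp (- (a\<^sup>2 / (2 * real n * \<sigma>\<^sup>2)))"
      using Bb[OF sg1[of c]] Bb[OF sg2[of c]] by simp
    finally show "measure M (B (axis c 1) \<union> B (- axis c 1)) \<le> 2 * exp (- (a\<^sup>2 / (2 * real n * \<sigma>\<^sup>2)))" .
  qed
  also have "\<dots> = 2 * real CARD('d) * exp (- (a\<^sup>2 / (2 * real n * \<sigma>\<^sup>2)))" by simp
  finally show ?thesis .
qed

lemma norm_bound:
  assumes i: "i < K" and sig: "\<sigma>u > 0" and ns: "\<And>z. norm z = 1 \<Longrightarrow> subgaussian (\<nu> i) (\<lambda>x. x \<bullet> z) \<sigma>u"
    and mg: "\<And>c. subgaussian (\<nu> i) (\<lambda>x. x $ c) \<sigma>"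
    and n: "n \<ge> 1" and b: "b \<ge> 0"
  shows "measure M {w \<in> space M. b < norm (Svec A Y (mean_vec (\<nu> i)) i n h w)}
           \<le> 5 ^ CARD('d) * exp (- ((b / 2)\<^sup>2 / (2 * real n * \<sigma>u\<^sup>2)))"
proof -
  interpret prob_space M by (rule M)
  let ?S = "Svec A Y (mean_vec (\<nu> i)) i n h"
  have [measurable]: "?S \<in> borel_measurable M" by (rule Svec_meas)
  obtain Z :: "(real ^ 'd) set" where Z: "finite Z" "card Z \<le> 5 ^ CARD('d)" "\<forall>z\<in>Z. norm z = 1"
      "\<forall>x. \<exists>z\<in>Z. norm x \<le> 2 * (x \<bullet> z)"
    using net_exists by blast
  define B where "B z = {w \<in> space M. b / 2 \<le> ?S w \<bullet> z}" for z
  have Bm: "B z \<in> sets M" for z unfolding B_def by measurable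
  have Bb: "measure M (B z) \<le> exp (- ((b / 2)\<^sup>2 / (2 * real n * \<sigma>u\<^sup>2)))" if "z \<in> Z" for z
    unfolding B_def using b Z(3) that by (intro chernoff[OF i ns sig mg n]) auto
  have sub: "{w \<in> space M. b < norm (?S w)} \<subseteq> (\<Union>z\<in>Z. B z)"
  proof
    fix w assume w: "w \<in> {w \<in> space M. b < norm (?S w)}"
    obtain z where z: "z \<in> Z" "norm (?S w) \<le> 2 * (?S w \<bullet> z)" using Z(4) by blast
    then have "b / 2 \<le> ?S w \<bullet> z" using w by auto
    then show "w \<in> (\<Union>z\<in>Z. B z)" using w z unfolding B_def by blast
  qed
  have "measure M {w \<in> space M. b < norm (?S w)} \<le> measure M (\<Union>z\<in>Z. B z)"
    using Bm Z(1) by (intro finite_measure_mono[OF sub]) auto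
  also have "\<dots> \<le> (\<Sum>z\<in>Z. measure M (B z))"
    using Bm Z(1) by (intro finite_measure_subadditive_finite) auto
  also have "\<dots> \<le> (\<Sum>z\<in>Z. exp (- ((b / 2)\<^sup>2 / (2 * real n * \<sigma>u\<^sup>2))))"
    using Bb by (rule sum_mono)
  also have "\<dots> = real (card Z) * exp (- ((b / 2)\<^sup>2 / (2 * real n * \<sigma>u\<^sup>2)))" by simp
  also have "\<dots> \<le> 5 ^ CARD('d) * exp (- ((b / 2)\<^sup>2 / (2 * real n * \<sigma>u\<^sup>2)))"
  proof (rule mult_right_mono)
    have "real (card Z) \<le> real (5 ^ CARD('d))" using Z(2) by linarith
    then show "real (card Z) \<le> 5 ^ CARD('d)" by simp
  qed simp
  finally show ?thesis .
qed

end

lemma pulls_le: "pulls A t i w \<le> t"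
proof -
  have "pulls A t i w \<le> card {1..t}" unfolding pulls_def by (rule card_mono) auto
  then show ?thesis by simp
qed

lemma pulls_mono: "s \<le> t \<Longrightarrow> pulls A s i w \<le> pulls A t i w"
  unfolding pulls_def by (rule card_mono) auto

lemma cnt_set:
  assumes "t \<le> h" "pulls A t i w = n"
  shows "{s \<in> {1..h}. cnt A i n s w} = {s \<in> {1..t}. A s w = i}"
proof (intro set_eqI iffI)
  fix s assume s: "s \<in> {s \<in> {1..h}. cnt A i n s w}"
  then have s1: "1 \<le> s" "A s w = i" "pulls A (s - 1) i w < n" by (auto simp: cnt_def)
  have "s \<le> t"
  proof (rule ccontr)
    assume "\<not> s \<le> t"
    then have "pulls A t i w \<le> pulls A (s - 1) i w" by (intro pulls_mono) auto
    then show False using s1 assms by simp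
  qed
  then show "s \<in> {s \<in> {1..t}. A s w = i}" using s1 by auto
next
  fix s assume s: "s \<in> {s \<in> {1..t}. A s w = i}"
  then have s1: "1 \<le> s" "s \<le> t" "A s w = i" by auto
  obtain s' where s': "s = Suc s'" using s1 by (cases s) auto
  have "pulls A s i w = pulls A (s - 1) i w + 1" using s1 s' by (simp add: pulls_Suc)
  moreover have "pulls A s i w \<le> pulls A t i w" using s1 by (intro pulls_mono)
  ultimately have "pulls A (s - 1) i w < n" using assms by simp
  then show "s \<in> {s \<in> {1..h}. cnt A i n s w}" using s1 assms by (auto simp: cnt_def)
qed

lemma link:
  assumes "t \<le> h" "pulls A t i w = n" "n > 0"
  shows "emp_mean A Y t i w - \<mu> = (1 / real n) *\<^sub>R Svec A Y \<mu> i n h w"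
proof -
  let ?P = "{s \<in> {1..t}. A s w = i}"
  have cardP: "card ?P = n" using assms(2) by (simp add: pulls_def)
  have "Svec A Y \<mu> i n h w = (\<Sum>s\<in>{s \<in> {1..h}. cnt A i n s w}. Y s w - \<mu>)"
    unfolding Svec_def by (rule sum.inter_filter[symmetric]) simp
  also have "\<dots> = (\<Sum>s\<in>?P. Y s w - \<mu>)" by (subst cnt_set[OF assms(1,2)]) (rule refl)
  also have "\<dots> = (\<Sum>s\<in>?P. Y s w) - (\<Sum>s\<in>?P. \<mu>)" by (rule sum_subtractf)
  also have "(\<Sum>s\<in>?P. \<mu>) = real n *\<^sub>R \<mu>" by (simp only: sum_constant_scaleR cardP)
  finally have "(1 / real n) *\<^sub>R Svec A Y \<mu> i n h w = (1 / real n) *\<^sub>R (\<Sum>s\<in>?P. Y s w) - \<mu>"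
    using assms(3) by (simp add: scaleR_diff_right)
  then show ?thesis unfolding emp_mean_def assms(2) by simp
qed

context bandit
begin

definition BadC where
  "BadC \<sigma> fr i n h \<tau> = {w \<in> space M. \<exists>c. sqrt (2 * \<sigma>\<^sup>2 * real n * fr \<tau>) < \<bar>Svec A Y (mean_vec (\<nu> i)) i n h w $ c\<bar>}"
definition BadN where
  "BadN \<sigma>u gr i n h \<tau> = {w \<in> space M. sqrt (2 * \<sigma>u\<^sup>2 * real n * gr \<tau>) < norm (Svec A Y (mean_vec (\<nu> i)) i n h w)}"

lemma fail_subset:
  assumes fmono: "\<And>s t. 1 \<le> s \<Longrightarrow> s \<le> t \<Longrightarrow> fr s \<le> fr t"
    and gmono: "\<And>s t. 1 \<le> s \<Longrightarrow> s \<le> t \<Longrightarrow> gr s \<le> gr t"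
    and fpos: "\<And>s. 1 \<le> s \<Longrightarrow> 0 \<le> fr s" and gpos: "\<And>s. 1 \<le> s \<Longrightarrow> 0 \<le> gr s"
    and t0: "1 \<le> t0"
  shows "{w \<in> space M. \<not> (\<forall>t\<in>{t0..T}. good_event K (\<lambda>i. mean_vec (\<nu> i)) \<sigma> \<sigma>u fr gr A Y t w)}
     \<subseteq> (\<Union>i\<in>{..<K}. \<Union>n\<in>{1..T}. BadC \<sigma> fr i n T (max n t0) \<union> BadN \<sigma>u gr i n T (max n t0))"
proof
  fix w assume "w \<in> {w \<in> space M. \<not> (\<forall>t\<in>{t0..T}. good_event K (\<lambda>i. mean_vec (\<nu> i)) \<sigma> \<sigma>u fr gr A Y t w)}"
  then obtain t i where w: "w \<in> space M" and t': "t \<in> {t0..T}" and i: "i < K"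
    and np: "pulls A t i w > 0"
    and bad: "\<not> ((\<forall>c. \<bar>emp_mean A Y t i w $ c - mean_vec (\<nu> i) $ c\<bar>
               \<le> sqrt (2 * \<sigma>\<^sup>2 * fr t / real (pulls A t i w))) \<and>
        norm (emp_mean A Y t i w - mean_vec (\<nu> i)) \<le> sqrt (2 * \<sigma>u\<^sup>2 * gr t / real (pulls A t i w)))"
    unfolding good_event_def by blast
  have t: "t0 \<le> t" "t \<le> T" using t' by auto
  define n where "n = pulls A t i w"
  define S where "S = Svec A Y (mean_vec (\<nu> i)) i n T w"
  have n0: "n > 0" "real n > 0" using np by (auto simp: n_def)
  have nt: "n \<le> t" unfolding n_def by (rule pulls_le)
  have n1T: "n \<in> {1..T}" using n0 nt t by auto
  define \<tau> where "\<tau> = max n t0"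
  have tau: "1 \<le> \<tau>" "\<tau> \<le> t" using t0 t nt by (auto simp: \<tau>_def)
  have eq: "emp_mean A Y t i w - mean_vec (\<nu> i) = (1 / real n) *\<^sub>R S"
    unfolding S_def by (rule link) (use t n0 in \<open>auto simp: n_def\<close>)
  have key: "sqrt (2 * s\<^sup>2 * real n * r \<tau>) < x" if "sqrt (2 * s\<^sup>2 * r t / real n) < x / real n"
     and rm: "r \<tau> \<le> r t" and rp: "0 \<le> r \<tau>" for s x and r :: "nat \<Rightarrow> real"
  proof -
    have "sqrt (2 * s\<^sup>2 * real n * r \<tau>) \<le> sqrt (2 * s\<^sup>2 * real n * r t)"
      using rm n0 by (intro real_sqrt_le_mono mult_left_mono) auto
    also have "\<dots> = real n * sqrt (2 * s\<^sup>2 * r t / real n)"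
    proof -
      have "2 * s\<^sup>2 * real n * r t = (real n)\<^sup>2 * (2 * s\<^sup>2 * r t / real n)"
        using n0 by (simp add: field_simps power2_eq_square)
      then show ?thesis by (simp only: real_sqrt_mult real_sqrt_abs abs_of_nat)
    qed
    also have "\<dots> < real n * (x / real n)" using that(1) n0 by (intro mult_strict_left_mono) auto
    also have "\<dots> = x" using n0 by simp
    finally show ?thesis .
  qed
  have "w \<in> BadC \<sigma> fr i n T \<tau> \<union> BadN \<sigma>u gr i n T \<tau>"
  proof (rule ccontr)
      assume nb: "w \<notin> BadC \<sigma> fr i n T \<tau> \<union> BadN \<sigma>u gr i n T \<tau>"
      have c1: "\<forall>c. \<bar>emp_mean A Y t i w $ c - mean_vec (\<nu> i) $ c\<bar> \<le> sqrt (2 * \<sigma>\<^sup>2 * fr t / real n)"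
      proof
        fix c
        show "\<bar>emp_mean A Y t i w $ c - mean_vec (\<nu> i) $ c\<bar> \<le> sqrt (2 * \<sigma>\<^sup>2 * fr t / real n)"
        proof (rule ccontr)
          assume "\<not> ?thesis"
          then have "sqrt (2 * \<sigma>\<^sup>2 * fr t / real n) < \<bar>S $ c\<bar> / real n"
            using eq n0 by (simp add: vector_minus_component[symmetric] abs_mult)
          then have "sqrt (2 * \<sigma>\<^sup>2 * real n * fr \<tau>) < \<bar>S $ c\<bar>"
            by (rule key) (use fmono fpos tau in auto)
          then show False using nb w unfolding BadC_def S_def by auto
        qed
      qed
      have c2: "norm (emp_mean A Y t i w - mean_vec (\<nu> i)) \<le> sqrt (2 * \<sigma>u\<^sup>2 * gr t / real n)"
      proof (rule ccontr)
        assume "\<not> ?thesis"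
        then have "sqrt (2 * \<sigma>u\<^sup>2 * gr t / real n) < norm S / real n"
          using eq n0 by simp
        then have "sqrt (2 * \<sigma>u\<^sup>2 * real n * gr \<tau>) < norm S"
          by (rule key) (use gmono gpos tau in auto)
        then show False using nb w unfolding BadN_def S_def by auto
      qed
      show False using bad c1 c2 by (simp add: n_def)
  qed
  then show "w \<in> (\<Union>i\<in>{..<K}. \<Union>n\<in>{1..T}. BadC \<sigma> fr i n T (max n t0) \<union> BadN \<sigma>u gr i n T (max n t0))"
    using i n1T unfolding \<tau>_def by blast
qed

lemma BadC_meas: "BadC \<sigma> fr i n h \<tau> \<in> sets M"
proof -
  have [measurable]: "Svec A Y (mean_vec (\<nu> i)) i n h \<in> borel_measurable M" by (rule Svec_meas)
  have "BadC \<sigma> fr i n h \<tau> = (\<Union>c\<in>UNIV. {w \<in> space M. sqrt (2 * \<sigma>\<^sup>2 * real n * fr \<tau>) < \<bar>Svec A Y (mean_vec (\<nu> i)) i n h w $ c\<bar>})"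
    unfolding BadC_def by auto
  also have "\<dots> \<in> sets M" by (intro sets.finite_UN) auto
  finally show ?thesis .
qed

lemma BadN_meas: "BadN \<sigma>u gr i n h \<tau> \<in> sets M"
proof -
  have [measurable]: "Svec A Y (mean_vec (\<nu> i)) i n h \<in> borel_measurable M" by (rule Svec_meas)
  show ?thesis unfolding BadN_def by measurable
qed

lemma bad_bound:
  assumes i: "i < K" and sig: "\<sigma> > 0" "\<sigma>u > 0"
    and mg: "\<And>c. subgaussian (\<nu> i) (\<lambda>x. x $ c) \<sigma>"
    and ns: "\<And>z. norm z = 1 \<Longrightarrow> subgaussian (\<nu> i) (\<lambda>x. x \<bullet> z) \<sigma>u"
    and n: "n \<ge> 1" and fp: "fr \<tau> \<ge> 0" and gp: "gr \<tau> \<ge> 0"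
  shows "measure M (BadC \<sigma> fr i n h \<tau> \<union> BadN \<sigma>u gr i n h \<tau>)
     \<le> 2 * real CARD('d) * exp (- fr \<tau>) + 5 ^ CARD('d) * exp (- (gr \<tau> / 4))"
proof -
  interpret prob_space M by (rule M)
  have "measure M (BadC \<sigma> fr i n h \<tau> \<union> BadN \<sigma>u gr i n h \<tau>) \<le> measure M (BadC \<sigma> fr i n h \<tau>) + measure M (BadN \<sigma>u gr i n h \<tau>)"
    by (intro measure_Un_le BadC_meas BadN_meas)
  also have "measure M (BadC \<sigma> fr i n h \<tau>) \<le> 2 * real CARD('d) * exp (- ((sqrt (2 * \<sigma>\<^sup>2 * real n * fr \<tau>))\<^sup>2 / (2 * real n * \<sigma>\<^sup>2)))"
    unfolding BadC_def by (rule coord_bound[OF i sig(1) mg n]) (use fp in simp)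
  also have "(sqrt (2 * \<sigma>\<^sup>2 * real n * fr \<tau>))\<^sup>2 / (2 * real n * \<sigma>\<^sup>2) = fr \<tau>"
    using fp n sig by (simp add: field_simps)
  also have "measure M (BadN \<sigma>u gr i n h \<tau>) \<le> 5 ^ CARD('d) * exp (- ((sqrt (2 * \<sigma>u\<^sup>2 * real n * gr \<tau>) / 2)\<^sup>2 / (2 * real n * \<sigma>u\<^sup>2)))"
    unfolding BadN_def by (rule norm_bound[OF i sig(2) ns mg n]) (use gp in simp_all)
  also have "(sqrt (2 * \<sigma>u\<^sup>2 * real n * gr \<tau>) / 2)\<^sup>2 / (2 * real n * \<sigma>u\<^sup>2) = gr \<tau> / 4"
    using gp n sig by (simp add: field_simps power_divide)
  finally show ?thesis by simp
qed

lemma fail_measure: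
  assumes fmono: "\<And>s t. 1 \<le> s \<Longrightarrow> s \<le> t \<Longrightarrow> fr s \<le> fr t"
    and gmono: "\<And>s t. 1 \<le> s \<Longrightarrow> s \<le> t \<Longrightarrow> gr s \<le> gr t"
    and fpos: "\<And>s. 1 \<le> s \<Longrightarrow> 0 \<le> fr s" and gpos: "\<And>s. 1 \<le> s \<Longrightarrow> 0 \<le> gr s"
    and t0: "1 \<le> t0"
    and sig: "\<sigma> > 0" "\<sigma>u > 0"
    and mg: "\<And>i c. i < K \<Longrightarrow> subgaussian (\<nu> i) (\<lambda>x. x $ c) \<sigma>"
    and ns: "\<And>i z. i < K \<Longrightarrow> norm z = 1 \<Longrightarrow> subgaussian (\<nu> i) (\<lambda>x. x \<bullet> z) \<sigma>u"
  shows "measure M {w \<in> space M. \<not> (\<forall>t\<in>{t0..T}. good_event K (\<lambda>i. mean_vec (\<nu> i)) \<sigma> \<sigma>u fr gr A Y t w)}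
     \<le> (\<Sum>n\<in>{1..T}. real K * (2 * real CARD('d) * exp (- fr (max n t0)) + 5 ^ CARD('d) * exp (- (gr (max n t0) / 4))))"
proof -
  interpret prob_space M by (rule M)
  let ?B = "\<lambda>i n. BadC \<sigma> fr i n T (max n t0) \<union> BadN \<sigma>u gr i n T (max n t0)"
  have Bm: "?B i n \<in> sets M" for i n by (intro sets.Un BadC_meas BadN_meas)
  have "measure M {w \<in> space M. \<not> (\<forall>t\<in>{t0..T}. good_event K (\<lambda>i. mean_vec (\<nu> i)) \<sigma> \<sigma>u fr gr A Y t w)}
      \<le> measure M (\<Union>i\<in>{..<K}. \<Union>n\<in>{1..T}. ?B i n)"
  proof (rule finite_measure_mono)
    show "{w \<in> space M. \<not> (\<forall>t\<in>{t0..T}. good_event K (\<lambda>i. mean_vec (\<nu> i)) \<sigma> \<sigma>u fr gr A Y t w)}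
      \<subseteq> (\<Union>i\<in>{..<K}. \<Union>n\<in>{1..T}. ?B i n)"
      by (rule fail_subset) (use fmono gmono fpos gpos t0 in auto)
    show "(\<Union>i\<in>{..<K}. \<Union>n\<in>{1..T}. ?B i n) \<in> sets M"
      by (intro sets.finite_UN Bm) auto
  qed
  also have "\<dots> \<le> (\<Sum>i\<in>{..<K}. measure M (\<Union>n\<in>{1..T}. ?B i n))"
    by (intro finite_measure_subadditive_finite) (auto intro!: sets.finite_UN Bm)
  also have "\<dots> \<le> (\<Sum>i\<in>{..<K}. \<Sum>n\<in>{1..T}. measure M (?B i n))"
    by (intro sum_mono finite_measure_subadditive_finite) (auto intro!: Bm)
  also have "\<dots> \<le> (\<Sum>i\<in>{..<K}. \<Sum>n\<in>{1..T}. 2 * real CARD('d) * exp (- fr (max n t0)) + 5 ^ CARD('d) * exp (- (gr (max n t0) / 4)))"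
  proof (intro sum_mono)
    fix i n assume "i \<in> {..<K}" "n \<in> {1..T}"
    then show "measure M (?B i n) \<le> 2 * real CARD('d) * exp (- fr (max n t0)) + 5 ^ CARD('d) * exp (- (gr (max n t0) / 4))"
      using t0 by (intro bad_bound sig mg ns fpos gpos) auto
  qed
  also have "\<dots> = (\<Sum>n\<in>{1..T}. real K * (2 * real CARD('d) * exp (- fr (max n t0)) + 5 ^ CARD('d) * exp (- (gr (max n t0) / 4))))"
    by (simp add: sum_distrib_left)
  finally show ?thesis .
qed

end

context bandit
begin

lemma pulls_nat_meas[measurable]: "pulls A t i \<in> measurable M (count_space UNIV)"
proof (subst measurable_count_space_eq2_countable, intro conjI ballI)
  show "pulls A t i \<in> space M \<rightarrow> UNIV" by simp
  fix a :: nat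
  have rm: "(\<lambda>w. real (pulls A t i w)) \<in> borel_measurable M"
  proof -
    have "(\<lambda>w. real (pulls A t i w)) \<in> borel_measurable (F t)" by (rule pulls_meas) simp
    then show ?thesis by (rule FM)
  qed
  have "pulls A t i -` {a} \<inter> space M = {w \<in> space M. real (pulls A t i w) = real a}" by auto
  also have "\<dots> \<in> sets M" using rm by measurable
  finally show "pulls A t i -` {a} \<inter> space M \<in> sets M" .
qed

lemma emp_mean_meas[measurable]: "emp_mean A Y t i \<in> borel_measurable M"
proof -
  have e: "emp_mean A Y t i w = (1 / real (pulls A t i w)) *\<^sub>R (\<Sum>s\<in>{1..t}. indicator {w \<in> space M. A s w = i} w *\<^sub>R Y s w)"
    if "w \<in> space M" for w
  proof -
    have "(\<Sum>s\<in>{s\<in>{1..t}. A s w = i}. Y s w) = (\<Sum>s\<in>{1..t}. if A s w = i then Y s w else 0)"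
      by (rule sum.inter_filter) simp
    also have "\<dots> = (\<Sum>s\<in>{1..t}. indicator {w \<in> space M. A s w = i} w *\<^sub>R Y s w)"
      by (rule sum.cong) (auto simp: indicator_def that)
    finally show ?thesis unfolding emp_mean_def by simp
  qed
  have "(\<lambda>w. (\<Sum>s\<in>{1..t}. indicator {w \<in> space M. A s w = i} w *\<^sub>R Y s w)) \<in> borel_measurable (F t)"
  proof (rule borel_measurable_sum)
    fix s assume "s \<in> {1..t}"
    then have s: "1 \<le> s" "s \<le> t" by auto
    have [measurable]: "{w \<in> space M. A s w = i} \<in> sets (F t)" using s by (intro A_pred) auto
    have [measurable]: "Y s \<in> borel_measurable (F t)" using s by (rule Y_meas')
    show "(\<lambda>w. indicator {w \<in> space M. A s w = i} w *\<^sub>R Y s w) \<in> borel_measurable (F t)"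
      by measurable
  qed
  then have [measurable]: "(\<lambda>w. (\<Sum>s\<in>{1..t}. indicator {w \<in> space M. A s w = i} w *\<^sub>R Y s w)) \<in> borel_measurable M"
    by (rule FM)
  have "(\<lambda>w. (1 / real (pulls A t i w)) *\<^sub>R (\<Sum>s\<in>{1..t}. indicator {w \<in> space M. A s w = i} w *\<^sub>R Y s w)) \<in> borel_measurable M"
    by measurable
  then show ?thesis by (rule measurable_cong[THEN iffD1, rotated]) (simp add: e)
qed

lemma good_meas: "{w \<in> space M. good_event K (\<lambda>i. mean_vec (\<nu> i)) \<sigma> \<sigma>u fr gr A Y t w} \<in> sets M"
proof -
  have "Measurable.pred M (\<lambda>w. good_event K (\<lambda>i. mean_vec (\<nu> i)) \<sigma> \<sigma>u fr gr A Y t w)"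
    unfolding good_event_def
  proof (rule pred_intros_countable(1), rule pred_intros_imp')
    fix i
    have p1: "Measurable.pred M (\<lambda>w. 0 < pulls A t i w)" by measurable
    have p2: "Measurable.pred M (\<lambda>w. norm (emp_mean A Y t i w - mean_vec (\<nu> i)) \<le> sqrt (2 * \<sigma>u\<^sup>2 * gr t / real (pulls A t i w)))"
      by measurable
    have "Measurable.pred M (\<lambda>w. \<forall>c\<in>UNIV. \<bar>emp_mean A Y t i w $ c - mean_vec (\<nu> i) $ c\<bar> \<le> sqrt (2 * \<sigma>\<^sup>2 * fr t / real (pulls A t i w)))"
    proof (rule pred_intros_finite(3))
      fix c :: 'd
      have "(\<lambda>w. emp_mean A Y t i w \<bullet> axis c 1) \<in> borel_measurable M" by measurable
      then have [measurable]: "(\<lambda>w. emp_mean A Y t i w $ c) \<in> borel_measurable M"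
        by (simp add: inner_axis)
      show "Measurable.pred M (\<lambda>w. \<bar>emp_mean A Y t i w $ c - mean_vec (\<nu> i) $ c\<bar> \<le> sqrt (2 * \<sigma>\<^sup>2 * fr t / real (pulls A t i w)))"
        by measurable
    qed simp
    then have p3: "Measurable.pred M (\<lambda>w. \<forall>c. \<bar>emp_mean A Y t i w $ c - mean_vec (\<nu> i) $ c\<bar> \<le> sqrt (2 * \<sigma>\<^sup>2 * fr t / real (pulls A t i w)))"
      by simp
    show "Measurable.pred M (\<lambda>w. 0 < pulls A t i w \<longrightarrow>
         (\<forall>c. \<bar>emp_mean A Y t i w $ c - mean_vec (\<nu> i) $ c\<bar> \<le> sqrt (2 * \<sigma>\<^sup>2 * fr t / real (pulls A t i w))) \<and>
         norm (emp_mean A Y t i w - mean_vec (\<nu> i)) \<le> sqrt (2 * \<sigma>u\<^sup>2 * gr t / real (pulls A t i w)))"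
      by (intro pred_intros_logic(4) pred_intros_logic(3) p1 p2 p3)
  qed
  then show ?thesis by (simp add: Measurable.pred_def)
qed

end

lemma zeta_step:
  fixes x \<alpha> :: real
  assumes a: "\<alpha> > 1" and x: "x \<ge> 2"
  shows "x powr (- \<alpha>) \<le> ((x - 1) powr (1 - \<alpha>) - x powr (1 - \<alpha>)) / (\<alpha> - 1)"
proof -
  have "\<exists>z. x - 1 < z \<and> z < x \<and> (x powr (1 - \<alpha>) - (x - 1) powr (1 - \<alpha>) = (x - (x - 1)) * ((1 - \<alpha>) * z powr (1 - \<alpha> - 1)))"
  proof (rule MVT2)
    show "x - 1 < x" by simp
    fix y assume "x - 1 \<le> y" "y \<le> x"
    then have "y > 0" using x by simp
    then show "((\<lambda>u. u powr (1 - \<alpha>)) has_real_derivative (1 - \<alpha>) * y powr (1 - \<alpha> - 1)) (at y)"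
      by (rule has_real_derivative_powr)
  qed
  then obtain z where z: "x - 1 < z" "z < x"
    and eq: "x powr (1 - \<alpha>) - (x - 1) powr (1 - \<alpha>) = (1 - \<alpha>) * z powr (- \<alpha>)" by auto
  have "x powr (- \<alpha>) \<le> z powr (- \<alpha>)" using z x a by (intro powr_mono2') auto
  then have "(\<alpha> - 1) * x powr (- \<alpha>) \<le> (\<alpha> - 1) * z powr (- \<alpha>)" using a by simp
  also have "\<dots> = (x - 1) powr (1 - \<alpha>) - x powr (1 - \<alpha>)" using eq by (simp add: algebra_simps)
  finally show ?thesis using a by (simp add: field_simps)
qed

lemma zeta_partial:
  fixes \<alpha> :: real
  assumes a: "\<alpha> > 1"
  shows "T \<ge> 1 \<Longrightarrow> (\<Sum>n\<in>{1..T}. real n powr (- \<alpha>)) \<le> \<alpha> / (\<alpha> - 1) - real T powr (1 - \<alpha>) / (\<alpha> - 1)"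
proof (induction T)
  case 0 then show ?case by simp
next
  case (Suc T)
  show ?case
  proof (cases "T = 0")
    case True
    have "\<alpha> / (\<alpha> - 1) - 1 / (\<alpha> - 1) = 1" using a by (simp add: diff_divide_distrib[symmetric])
    then show ?thesis using True by simp
  next
    case False
    then have IH: "(\<Sum>n\<in>{1..T}. real n powr (- \<alpha>)) \<le> \<alpha> / (\<alpha> - 1) - real T powr (1 - \<alpha>) / (\<alpha> - 1)"
      using Suc.IH by simp
    have st: "real (Suc T) powr (- \<alpha>) \<le> ((real (Suc T) - 1) powr (1 - \<alpha>) - real (Suc T) powr (1 - \<alpha>)) / (\<alpha> - 1)"
      using False by (intro zeta_step a) auto
    have "(\<Sum>n\<in>{1..Suc T}. real n powr (- \<alpha>)) = (\<Sum>n\<in>{1..T}. real n powr (- \<alpha>)) + real (Suc T) powr (- \<alpha>)"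
      by simp
    also have "\<dots> \<le> \<alpha> / (\<alpha> - 1) - real T powr (1 - \<alpha>) / (\<alpha> - 1) + ((real T) powr (1 - \<alpha>) - real (Suc T) powr (1 - \<alpha>)) / (\<alpha> - 1)"
      using IH st by simp
    also have "\<dots> = \<alpha> / (\<alpha> - 1) - real (Suc T) powr (1 - \<alpha>) / (\<alpha> - 1)"
      by (simp only: diff_divide_distrib)
    finally show ?thesis .
  qed
qed

lemma zeta_bound:
  fixes \<alpha> :: real
  assumes a: "\<alpha> > 1"
  shows "(\<Sum>n\<in>{1..T}. real n powr (- \<alpha>)) \<le> 1 + 1 / (\<alpha> - 1)"
proof (cases "T \<ge> 1")
  case True
  have "(\<Sum>n\<in>{1..T}. real n powr (- \<alpha>)) \<le> \<alpha> / (\<alpha> - 1) - real T powr (1 - \<alpha>) / (\<alpha> - 1)"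
    by (rule zeta_partial[OF a True])
  also have "\<dots> \<le> \<alpha> / (\<alpha> - 1)" using a by simp
  also have "\<dots> = 1 + 1 / (\<alpha> - 1)" using a by (simp add: field_simps)
  finally show ?thesis .
next
  case False
  then show ?thesis using a by simp
qed

lemma ln80: "4 \<le> ln (4::real) + ln 20"
proof -
  have "ln (4::real) + ln 20 = 4 * ln 2 + ln 5"
  proof -
    have "ln (4::real) = ln (2 * 2)" by simp
    also have "\<dots> = 2 * ln 2" by (subst ln_mult) auto
    finally have l4: "ln (4::real) = 2 * ln 2" .
    have "ln (20::real) = ln (4 * 5)" by simp
    also have "\<dots> = ln 4 + ln 5" by (subst ln_mult) auto
    finally show ?thesis using l4 by simp
  qed
  moreover have "ln (5::real) \<ge> ln 4" by simp
  moreover have "ln (4::real) = 2 * ln 2"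
  proof -
    have "ln (4::real) = ln (2 * 2)" by simp
    also have "\<dots> = 2 * ln 2" by (subst ln_mult) auto
    finally show ?thesis .
  qed
  moreover have "2/3 \<le> ln (2::real)" by (rule ln2_ge_two_thirds)
  ultimately show ?thesis by linarith
qed

lemma part1_arith:
  fixes \<alpha> FF :: real and T :: nat
  assumes a: "\<alpha> > 1" and T: "T \<ge> 1" and F: "FF \<ge> 4"
  shows "3 * real T * real (nat \<lceil>real T / 2\<rceil>) powr (- \<alpha>) \<le> (real T / 2) powr (1 - \<alpha>) * (ln (real T) + 1) * FF"
proof -
  define t0 where "t0 = nat \<lceil>real T / 2\<rceil>"
  have t0h: "real t0 \<ge> real T / 2" unfolding t0_def by linarith
  have Th: "real T / 2 > 0" using T by simp
  have "real t0 powr (- \<alpha>) \<le> (real T / 2) powr (- \<alpha>)"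
    using t0h Th a by (intro powr_mono2') auto
  then have "real T * real t0 powr (- \<alpha>) \<le> real T * (real T / 2) powr (- \<alpha>)"
    by (simp add: mult_left_mono)
  also have "\<dots> = 2 * (real T / 2) powr (1 - \<alpha>)"
  proof -
    have "(real T / 2) powr (1 - \<alpha>) = (real T / 2) powr 1 * (real T / 2) powr (- \<alpha>)"
      by (subst powr_add[symmetric]) simp
    then show ?thesis using Th by simp
  qed
  finally have b1: "real T * real t0 powr (- \<alpha>) \<le> 2 * (real T / 2) powr (1 - \<alpha>)" .
  have P0: "(real T / 2) powr (1 - \<alpha>) > 0" using Th by simp
  show ?thesis
  proof (cases "T = 1")
    case True
    have "\<lceil>(1::real) / 2\<rceil> = 1" by (simp add: ceiling_eq_iff)
    then have t01: "t0 = 1" unfolding t0_def using True by simp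
    have "(1/2::real) powr (1 - \<alpha>) = 2 powr (\<alpha> - 1)"
      by (simp add: powr_divide powr_minus_divide[symmetric])
    also have "\<dots> \<ge> 1" using a by (intro ge_one_powr_ge_zero) auto
    finally have "(1/2::real) powr (1 - \<alpha>) \<ge> 1" .
    then have "1 * 4 \<le> (1/2::real) powr (1 - \<alpha>) * FF" using F by (intro mult_mono) auto
    then have "3 \<le> (1/2::real) powr (1 - \<alpha>) * FF" by linarith
    then show ?thesis using True t01 unfolding t0_def[symmetric] by simp
  next
    case False
    then have T2: "real T \<ge> 2" using T by simp
    have "ln (real T) \<ge> ln 2" using T2 by simp
    then have "ln (real T) + 1 \<ge> 5/3" using ln2_ge_two_thirds by linarith
    then have "(ln (real T) + 1) * FF \<ge> 5/3 * 4" using F by (intro mult_mono) auto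
    then have L: "(ln (real T) + 1) * FF \<ge> 6" by simp
    have "3 * real T * real t0 powr (- \<alpha>) \<le> 6 * (real T / 2) powr (1 - \<alpha>)" using b1 by simp
    also have "\<dots> \<le> (real T / 2) powr (1 - \<alpha>) * ((ln (real T) + 1) * FF)"
      using L P0 by (simp add: mult.commute mult_left_mono)
    finally show ?thesis unfolding t0_def by (simp add: mult.assoc)
  qed
qed

lemma term_alg:
  fixes K d k1 \<delta> p f5 :: real
  assumes "K > 0" "d > 0" "k1 > 0" "\<delta> > 0" "p > 0" "f5 > 0"
  shows "K * (2 * d * (1 / (4 * k1 * K * d * p / \<delta>)) + f5 * (1 / (4 * k1 * K * f5 * p / \<delta>)))
     = 3 * \<delta> / (4 * k1) * (1 / p)"
  using assms by (simp add: field_simps)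

theorem lemmaD3:
  fixes M :: "'w measure"
    and \<nu> :: "nat \<Rightarrow> (real ^ 'd) measure"
    and F :: "nat \<Rightarrow> 'w measure"
    and A :: "nat \<Rightarrow> 'w \<Rightarrow> nat"
    and Y :: "nat \<Rightarrow> 'w \<Rightarrow> real ^ 'd"
    and K :: nat and \<sigma> \<sigma>u \<alpha> k1 \<delta> :: real
  defines "d \<equiv> CARD('d)"
  defines "f \<equiv> \<lambda>(t::real) (\<delta>'::real). ln (4 * k1 * real K * real d * t powr \<alpha> / \<delta>')"
  defines "g \<equiv> \<lambda>(t::real) (\<delta>'::real). 4 * ln (4 * k1 * real K * 5 ^ d * t powr \<alpha> / \<delta>')"
  defines "E \<equiv> good_event K (\<lambda>i. mean_vec (\<nu> i)) \<sigma> \<sigma>u (\<lambda>t. f (real t) \<delta>) (\<lambda>t. g (real t) \<delta>) A Y"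
  assumes K: "K \<ge> 1"
    and sig: "\<sigma> > 0" "\<sigma>u > 0"
    and nu_prob: "\<And>i. i < K \<Longrightarrow> prob_space (\<nu> i)"
    and nu_sets: "\<And>i. i < K \<Longrightarrow> sets (\<nu> i) = sets borel"
    and marg_sg: "\<And>i c. i < K \<Longrightarrow> subgaussian (\<nu> i) (\<lambda>x. x $ c) \<sigma>"
    and norm_sg: "\<And>i z. i < K \<Longrightarrow> norm z = 1 \<Longrightarrow> subgaussian (\<nu> i) (\<lambda>x. x \<bullet> z) \<sigma>u"
    and M: "prob_space M"
    and filt_sub: "\<And>t. subalgebra M (F t)"
    and filt_mono: "\<And>s t. s \<le> t \<Longrightarrow> sets (F s) \<subseteq> sets (F t)"
    and A_meas: "\<And>t. t \<ge> 1 \<Longrightarrow> A t \<in> measurable (F (t - 1)) (count_space UNIV)"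
    and A_range: "\<And>t w. t \<ge> 1 \<Longrightarrow> w \<in> space M \<Longrightarrow> A t w < K"
    and Y_meas: "\<And>t. t \<ge> 1 \<Longrightarrow> Y t \<in> borel_measurable (F t)"
    and Y_law: "\<And>t i B S. t \<ge> 1 \<Longrightarrow> i < K \<Longrightarrow> B \<in> sets (F (t - 1)) \<Longrightarrow> S \<in> sets borel \<Longrightarrow>
        measure M (B \<inter> {w \<in> space M. A t w = i} \<inter> (Y t -` S \<inter> space M))
          = measure M (B \<inter> {w \<in> space M. A t w = i}) * measure (\<nu> i) S"
    and alpha: "\<alpha> > 1"
    and k1: "k1 > 1 + 1 / (\<alpha> - 1)"
    and delta: "0 < \<delta>" "\<delta> < 1"
  shows "(\<forall>T::nat. T \<ge> 1 \<longrightarrow>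
            measure M {w \<in> space M. \<not> (\<forall>t\<in>{nat \<lceil>real T / 2\<rceil>..T}. E t w)}
              \<le> \<delta> / (4 * k1) * (real T / 2) powr (1 - \<alpha>) * (ln (real T) + 1) * f (real T) \<delta>
                + \<delta> / (4 * k1) * (real T / 2) powr (1 - \<alpha>) * (ln (real T) + 1)
                    * f (real T) (\<delta> * real d / 5 ^ d))
       \<and> measure M {w \<in> space M. \<not> (\<forall>t\<ge>1. E t w)} \<le> \<delta>"
proof -
  interpret bandit M F A Y \<nu> K
  proof (rule bandit.intro)
    show "\<And>i. i < K \<Longrightarrow> prob_space (\<nu> i)" by (rule nu_prob)
    show "\<And>i. i < K \<Longrightarrow> sets (\<nu> i) = sets borel" by (rule nu_sets)
    show "prob_space M" by (rule M)
    show "\<And>t. subalgebra M (F t)" by (rule filt_sub)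
    show "\<And>s t. s \<le> t \<Longrightarrow> sets (F s) \<subseteq> sets (F t)" by (rule filt_mono)
    show "\<And>t. t \<ge> 1 \<Longrightarrow> A t \<in> measurable (F (t - 1)) (count_space UNIV)" by (rule A_meas)
    show "\<And>t. t \<ge> 1 \<Longrightarrow> Y t \<in> borel_measurable (F t)" by (rule Y_meas)
    show "\<And>t i B S. t \<ge> 1 \<Longrightarrow> i < K \<Longrightarrow> B \<in> sets (F (t - 1)) \<Longrightarrow> S \<in> sets borel \<Longrightarrow>
        measure M (B \<inter> {w \<in> space M. A t w = i} \<inter> (Y t -` S \<inter> space M))
          = measure M (B \<inter> {w \<in> space M. A t w = i}) * measure (\<nu> i) S" by (rule Y_law)
  qed
  interpret prob_space M by (rule M)
  define fr where "fr t = f (real t) \<delta>" for t :: nat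
  define gr where "gr t = g (real t) \<delta>" for t :: nat
  have Eeq: "E = good_event K (\<lambda>i. mean_vec (\<nu> i)) \<sigma> \<sigma>u fr gr A Y"
    unfolding E_def fr_def gr_def ..
  have d1: "real d \<ge> 1" unfolding d_def by simp
  have k1p: "k1 > 1"
  proof -
    have "1 / (\<alpha> - 1) > 0" using alpha by simp
    then show ?thesis using k1 by linarith
  qed
  have Kp: "real K \<ge> 1" using K by simp
  have pw1: "real t powr \<alpha> \<ge> 1" if "t \<ge> 1" for t :: nat
    using that alpha by (intro ge_one_powr_ge_zero) auto
  have pwmono: "real s powr \<alpha> \<le> real t powr \<alpha>" if "s \<le> t" for s t :: nat
    using that alpha by (intro powr_mono2) auto
  have p5: "(5::real) ^ d \<ge> 1" by simp
  define X where "X t = 4 * k1 * real K * real d * real t powr \<alpha> / \<delta>" for t :: nat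
  define Z where "Z t = 4 * k1 * real K * 5 ^ d * real t powr \<alpha> / \<delta>" for t :: nat
  have frX: "fr t = ln (X t)" for t unfolding fr_def f_def X_def ..
  have grZ: "gr t = 4 * ln (Z t)" for t unfolding gr_def g_def Z_def ..
  have X1: "X t \<ge> 4" if "t \<ge> 1" for t
  proof -
    have "1 * 1 * 1 * 1 \<le> k1 * real K * real d * real t powr \<alpha>"
      using k1p Kp d1 pw1[OF that] by (intro mult_mono) auto
    then have "4 * \<delta> \<le> 4 * k1 * real K * real d * real t powr \<alpha>" using delta by simp
    then show ?thesis unfolding X_def using delta by (simp add: le_divide_eq)
  qed
  have Z1: "Z t \<ge> 20" if "t \<ge> 1" for t
  proof -
    have "(5::real) ^ 1 \<le> 5 ^ d" using d1 by (intro power_increasing) auto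
    then have "1 * 1 * 5 * 1 \<le> k1 * real K * 5 ^ d * real t powr \<alpha>"
      using k1p Kp pw1[OF that] by (intro mult_mono) auto
    moreover have "20 * \<delta> \<le> 20" using delta by simp
    ultimately have "20 * \<delta> \<le> 4 * k1 * real K * 5 ^ d * real t powr \<alpha>" by linarith
    then show ?thesis unfolding Z_def using delta by (simp add: le_divide_eq)
  qed
  have Xmono: "X s \<le> X t" if "1 \<le> s" "s \<le> t" for s t
    unfolding X_def using pwmono[OF that(2)] k1p Kp d1 delta
    by (intro divide_right_mono mult_left_mono) auto
  have Zmono: "Z s \<le> Z t" if "1 \<le> s" "s \<le> t" for s t
    unfolding Z_def using pwmono[OF that(2)] k1p Kp delta
    by (intro divide_right_mono mult_left_mono) auto
  have fmono: "fr s \<le> fr t" if "1 \<le> s" "s \<le> t" for s t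
    unfolding frX using Xmono[OF that] X1[OF that(1)] by simp
  have gmono: "gr s \<le> gr t" if "1 \<le> s" "s \<le> t" for s t
    unfolding grZ using Zmono[OF that] Z1[OF that(1)] by simp
  have fpos: "0 \<le> fr s" if "1 \<le> s" for s unfolding frX using X1[OF that] by simp
  have gpos: "0 \<le> gr s" if "1 \<le> s" for s unfolding grZ using Z1[OF that] by simp
  have trm: "real K * (2 * real CARD('d) * exp (- fr \<tau>) + 5 ^ CARD('d) * exp (- (gr \<tau> / 4)))
      = 3 * \<delta> / (4 * k1) * real \<tau> powr (- \<alpha>)" if "\<tau> \<ge> 1" for \<tau>
  proof -
    have e1: "exp (- fr \<tau>) = 1 / X \<tau>" unfolding frX using X1[OF that] by (simp add: exp_minus inverse_eq_divide)
    have e2: "exp (- (gr \<tau> / 4)) = 1 / Z \<tau>" unfolding grZ using Z1[OF that] by (simp add: exp_minus inverse_eq_divide)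
    have "real K * (2 * real CARD('d) * exp (- fr \<tau>) + 5 ^ CARD('d) * exp (- (gr \<tau> / 4)))
        = real K * (2 * real d * (1 / X \<tau>) + 5 ^ d * (1 / Z \<tau>))"
      unfolding e1 e2 d_def ..
    also have "\<dots> = 3 * \<delta> / (4 * k1) * (1 / real \<tau> powr \<alpha>)"
      unfolding X_def Z_def by (rule term_alg) (use k1p Kp d1 delta that in auto)
    also have "\<dots> = 3 * \<delta> / (4 * k1) * real \<tau> powr (- \<alpha>)" by (simp add: powr_minus_divide)
    finally show ?thesis .
  qed
  have FM1: "measure M {w \<in> space M. \<not> (\<forall>t\<in>{t0..T}. E t w)}
     \<le> (\<Sum>n\<in>{1..T}. 3 * \<delta> / (4 * k1) * real (max n t0) powr (- \<alpha>))" if "t0 \<ge> 1" for t0 T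
  proof -
    have "measure M {w \<in> space M. \<not> (\<forall>t\<in>{t0..T}. E t w)}
     \<le> (\<Sum>n\<in>{1..T}. real K * (2 * real CARD('d) * exp (- fr (max n t0)) + 5 ^ CARD('d) * exp (- (gr (max n t0) / 4))))"
      unfolding Eeq by (rule fail_measure[OF fmono gmono fpos gpos that sig(1) sig(2) marg_sg norm_sg])
    also have "\<dots> = (\<Sum>n\<in>{1..T}. 3 * \<delta> / (4 * k1) * real (max n t0) powr (- \<alpha>))"
      by (rule sum.cong) (use that trm in auto)
    finally show ?thesis .
  qed
  have part1: "measure M {w \<in> space M. \<not> (\<forall>t\<in>{nat \<lceil>real T / 2\<rceil>..T}. E t w)}
              \<le> \<delta> / (4 * k1) * (real T / 2) powr (1 - \<alpha>) * (ln (real T) + 1) * f (real T) \<delta>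
                + \<delta> / (4 * k1) * (real T / 2) powr (1 - \<alpha>) * (ln (real T) + 1)
                    * f (real T) (\<delta> * real d / 5 ^ d)" if T: "T \<ge> 1" for T :: nat
  proof -
    define t0 where "t0 = nat \<lceil>real T / 2\<rceil>"
    have t01: "t0 \<ge> 1" unfolding t0_def using T by linarith
    have c: "3 * \<delta> / (4 * k1) \<ge> 0" using delta k1p by simp
    have "measure M {w \<in> space M. \<not> (\<forall>t\<in>{t0..T}. E t w)}
        \<le> (\<Sum>n\<in>{1..T}. 3 * \<delta> / (4 * k1) * real (max n t0) powr (- \<alpha>))"
      by (rule FM1[OF t01])
    also have "\<dots> \<le> (\<Sum>n\<in>{1..T}. 3 * \<delta> / (4 * k1) * real t0 powr (- \<alpha>))"
    proof (rule sum_mono)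
      fix n assume "n \<in> {1..T}"
      have "real (max n t0) powr (- \<alpha>) \<le> real t0 powr (- \<alpha>)"
        using t01 alpha by (intro powr_mono2') auto
      then show "3 * \<delta> / (4 * k1) * real (max n t0) powr (- \<alpha>) \<le> 3 * \<delta> / (4 * k1) * real t0 powr (- \<alpha>)"
        using c by (rule mult_left_mono)
    qed
    also have "\<dots> = \<delta> / (4 * k1) * (3 * real T * real t0 powr (- \<alpha>))" by simp
    also have "\<dots> \<le> \<delta> / (4 * k1) * ((real T / 2) powr (1 - \<alpha>) * (ln (real T) + 1) * (f (real T) \<delta> + f (real T) (\<delta> * real d / 5 ^ d)))"
    proof (rule mult_left_mono)
      have f1: "f (real T) \<delta> \<ge> ln 4"
        using X1[OF T] frX[of T] unfolding fr_def by simp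
      have "4 * k1 * real K * real d * real T powr \<alpha> / (\<delta> * real d / 5 ^ d) = Z T"
        unfolding Z_def using d1 delta by (simp add: field_simps)
      then have f2: "f (real T) (\<delta> * real d / 5 ^ d) \<ge> ln 20"
        using Z1[OF T] unfolding f_def by simp
      have "f (real T) \<delta> + f (real T) (\<delta> * real d / 5 ^ d) \<ge> 4" using f1 f2 ln80 by linarith
      then show "3 * real T * real t0 powr (- \<alpha>) \<le> (real T / 2) powr (1 - \<alpha>) * (ln (real T) + 1) * (f (real T) \<delta> + f (real T) (\<delta> * real d / 5 ^ d))"
        unfolding t0_def by (rule part1_arith[OF alpha T])
      show "0 \<le> \<delta> / (4 * k1)" using delta k1p by simp
    qed
    also have "\<dots> = \<delta> / (4 * k1) * (real T / 2) powr (1 - \<alpha>) * (ln (real T) + 1) * f (real T) \<delta>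
                + \<delta> / (4 * k1) * (real T / 2) powr (1 - \<alpha>) * (ln (real T) + 1)
                    * f (real T) (\<delta> * real d / 5 ^ d)"
    proof -
      have gen: "\<And>c p L a b::real. c * (p * L * (a + b)) = c * p * L * a + c * p * L * b"
        by (simp add: algebra_simps)
      show ?thesis by (rule gen)
    qed
    finally show ?thesis unfolding t0_def .
  qed
  define Fl where "Fl T = {w \<in> space M. \<not> (\<forall>t\<in>{1..T}. E t w)}" for T :: nat
  have Fl_bound: "measure M (Fl T) \<le> \<delta>" for T
  proof -
    have "measure M (Fl T) \<le> (\<Sum>n\<in>{1..T}. 3 * \<delta> / (4 * k1) * real (max n 1) powr (- \<alpha>))"
      unfolding Fl_def by (rule FM1) simp
    also have "\<dots> = 3 * \<delta> / (4 * k1) * (\<Sum>n\<in>{1..T}. real n powr (- \<alpha>))"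
    proof -
      have "(\<Sum>n\<in>{1..T}. 3 * \<delta> / (4 * k1) * real (max n 1) powr (- \<alpha>))
          = (\<Sum>n\<in>{1..T}. 3 * \<delta> / (4 * k1) * real n powr (- \<alpha>))"
        by (rule sum.cong) (auto simp: max_def)
      then show ?thesis by (simp add: sum_distrib_left)
    qed
    also have "\<dots> \<le> 3 * \<delta> / (4 * k1) * (1 + 1 / (\<alpha> - 1))"
      using delta k1p by (intro mult_left_mono zeta_bound alpha) auto
    also have "\<dots> \<le> 3 * \<delta> / (4 * k1) * k1"
      using delta k1p k1 by (intro mult_left_mono) auto
    also have "\<dots> \<le> \<delta>" using k1p delta by simp
    finally show ?thesis .
  qed
  have Fl_meas: "Fl T \<in> sets M" for T
  proof -
    have "Fl T = (\<Union>t\<in>{1..T}. space M - {w \<in> space M. E t w})" unfolding Fl_def by auto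
    also have "\<dots> \<in> sets M" unfolding Eeq by (intro sets.finite_UN sets.Diff good_meas) auto
    finally show ?thesis .
  qed
  have Fl_inc: "incseq Fl" unfolding incseq_def Fl_def by auto
  have Fl_U: "{w \<in> space M. \<not> (\<forall>t\<ge>1. E t w)} = (\<Union>T. Fl T)"
  proof (intro set_eqI iffI)
    fix w assume "w \<in> {w \<in> space M. \<not> (\<forall>t\<ge>1. E t w)}"
    then obtain t where "w \<in> space M" "1 \<le> t" "\<not> E t w" by auto
    then have "w \<in> Fl t" unfolding Fl_def by auto
    then show "w \<in> (\<Union>T. Fl T)" by blast
  qed (auto simp: Fl_def)
  have lim: "(\<lambda>T. measure M (Fl T)) \<longlonglongrightarrow> measure M (\<Union>T. Fl T)"
    using Fl_meas Fl_inc by (intro finite_Lim_measure_incseq) auto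
  have part2: "measure M {w \<in> space M. \<not> (\<forall>t\<ge>1. E t w)} \<le> \<delta>"
    unfolding Fl_U using lim Fl_bound by (intro LIMSEQ_le_const2) auto
  show ?thesis using part1 part2 by blast
qed

end
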